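(* Let $R$ be a commutative noetherian ring, $\mathcal A$ an abelian $R$-linear category and $T:\mathcal A\to R\text{-Mod}$ a faithful, exact, $R$-linear functor into finitely generated $R$-modules. Let $\mathcal A\xrightarrow{\tilde T}\mathcal C(T_{\mathcal A})\xrightarrow{ff_T}R\text{-Mod}$ be the factorization of $T$ through its diagram category. Then the functor $\tilde T$ is full.
   Context: For a representation $T$ of a diagram in $R\text{-Mod}$ and a finite full subdiagram $F$, $\mathrm{End}(T_F):=\{(e_p)_{p\in F}\in\prod_{p\in F}\mathrm{End}_R(Tp): Tm\circ e_p=e_q\circ Tm$ for all edges $m:p\to q$ in $F\}$. For finite $F\subset F'$ restriction of scalars along the projection $\mathrm{End}(T_{F'})\to\mathrm{End}(T_F)$ gives functors between the categories of finitely generated left modules, and $\mathcal C(T)=\varinjlim_F\mathrm{End}(T_F)\text{-Mod}$ is the direct limit of categories over finite full subdiagrams. $\tilde T$ sends $p$ to $Tp$ with its natural module structure; $ff_T$ forgets the module structure. Here $\mathcal A$ is regarded as a diagram whose objects are those of $\mathcal A$ and whose edges are its morphisms. *)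

theory Defs
  imports "HOL-Algebra.Module" "HOL-Algebra.Ring_Divisibility"
begin

record ('o, 'm, 'r) lincat =
  Obj   :: "'o set"
  Hom   :: "'o \<Rightarrow> 'o \<Rightarrow> 'm set"
  comp  :: "'m \<Rightarrow> 'm \<Rightarrow> 'm"     (* comp g f = g \<circ> f *)
  ident :: "'o \<Rightarrow> 'm"
  hadd  :: "'m \<Rightarrow> 'm \<Rightarrow> 'm"
  hzero :: "'o \<Rightarrow> 'o \<Rightarrow> 'm"
  hsmult :: "'r \<Rightarrow> 'm \<Rightarrow> 'm"

definition hom_module :: "('o, 'm, 'r) lincat \<Rightarrow> 'o \<Rightarrow> 'o \<Rightarrow> ('r, 'm) module" where
  "hom_module C X Y = \<lparr>carrier = Hom C X Y, monoid.mult = (\<lambda>_ _. undefined), one = undefined,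
     zero = hzero C X Y, add = hadd C, smult = hsmult C\<rparr>"

definition is_category :: "('o, 'm, 'r) lincat \<Rightarrow> bool" where
  "is_category C \<longleftrightarrow>
     (\<forall>X Y f. f \<in> Hom C X Y \<longrightarrow> X \<in> Obj C \<and> Y \<in> Obj C) \<and>
     (\<forall>X Y X' Y' f. f \<in> Hom C X Y \<and> f \<in> Hom C X' Y' \<longrightarrow> X = X' \<and> Y = Y') \<and>
     (\<forall>X \<in> Obj C. ident C X \<in> Hom C X X) \<and>
     (\<forall>X Y Z f g. f \<in> Hom C X Y \<and> g \<in> Hom C Y Z \<longrightarrow> comp C g f \<in> Hom C X Z) \<and>
     (\<forall>X Y Z W f g h. f \<in> Hom C X Y \<and> g \<in> Hom C Y Z \<and> h \<in> Hom C Z W \<longrightarrow>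
         comp C h (comp C g f) = comp C (comp C h g) f) \<and>
     (\<forall>X Y f. f \<in> Hom C X Y \<longrightarrow> comp C f (ident C X) = f \<and> comp C (ident C Y) f = f)"

definition is_R_linear_category :: "('r, 'x) ring_scheme \<Rightarrow> ('o, 'm, 'r) lincat \<Rightarrow> bool" where
  "is_R_linear_category R C \<longleftrightarrow> is_category C \<and>
     (\<forall>X \<in> Obj C. \<forall>Y \<in> Obj C. module R (hom_module C X Y)) \<and>
     (\<forall>X Y Z f f' g g'. f \<in> Hom C X Y \<and> f' \<in> Hom C X Y \<and> g \<in> Hom C Y Z \<and> g' \<in> Hom C Y Z \<longrightarrow>
         comp C (hadd C g g') f = hadd C (comp C g f) (comp C g' f) \<and>
         comp C g (hadd C f f') = hadd C (comp C g f) (comp C g f')) \<and>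
     (\<forall>X Y Z f g r. f \<in> Hom C X Y \<and> g \<in> Hom C Y Z \<and> r \<in> carrier R \<longrightarrow>
         comp C (hsmult C r g) f = hsmult C r (comp C g f) \<and>
         comp C g (hsmult C r f) = hsmult C r (comp C g f))"

definition is_kernel :: "('o, 'm, 'r) lincat \<Rightarrow> 'o \<Rightarrow> 'o \<Rightarrow> 'm \<Rightarrow> 'o \<Rightarrow> 'm \<Rightarrow> bool" where
  "is_kernel C X Y f K k \<longleftrightarrow> K \<in> Obj C \<and> k \<in> Hom C K X \<and> comp C f k = hzero C K Y \<and>
     (\<forall>W \<in> Obj C. \<forall>h \<in> Hom C W X. comp C f h = hzero C W Y \<longrightarrow> (\<exists>!u. u \<in> Hom C W K \<and> comp C k u = h))"

definition is_cokernel :: "('o, 'm, 'r) lincat \<Rightarrow> 'o \<Rightarrow> 'o \<Rightarrow> 'm \<Rightarrow> 'o \<Rightarrow> 'm \<Rightarrow> bool" where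
  "is_cokernel C X Y f Q q \<longleftrightarrow> Q \<in> Obj C \<and> q \<in> Hom C Y Q \<and> comp C q f = hzero C X Q \<and>
     (\<forall>W \<in> Obj C. \<forall>h \<in> Hom C Y W. comp C h f = hzero C X W \<longrightarrow> (\<exists>!u. u \<in> Hom C Q W \<and> comp C u q = h))"

definition is_mono :: "('o, 'm, 'r) lincat \<Rightarrow> 'o \<Rightarrow> 'o \<Rightarrow> 'm \<Rightarrow> bool" where
  "is_mono C X Y m \<longleftrightarrow> m \<in> Hom C X Y \<and>
     (\<forall>W \<in> Obj C. \<forall>g \<in> Hom C W X. \<forall>h \<in> Hom C W X. comp C m g = comp C m h \<longrightarrow> g = h)"

definition is_epi :: "('o, 'm, 'r) lincat \<Rightarrow> 'o \<Rightarrow> 'o \<Rightarrow> 'm \<Rightarrow> bool" where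
  "is_epi C X Y e \<longleftrightarrow> e \<in> Hom C X Y \<and>
     (\<forall>W \<in> Obj C. \<forall>g \<in> Hom C Y W. \<forall>h \<in> Hom C Y W. comp C g e = comp C h e \<longrightarrow> g = h)"

definition is_abelian_R_linear_category :: "('r, 'x) ring_scheme \<Rightarrow> ('o, 'm, 'r) lincat \<Rightarrow> bool" where
  "is_abelian_R_linear_category R C \<longleftrightarrow> is_R_linear_category R C \<and>
     \<comment> \<open>zero object\<close>
     (\<exists>Z \<in> Obj C. \<forall>X \<in> Obj C. (\<exists>!u. u \<in> Hom C X Z) \<and> (\<exists>!u. u \<in> Hom C Z X)) \<and>
     \<comment> \<open>binary biproducts\<close>
     (\<forall>X \<in> Obj C. \<forall>Y \<in> Obj C. \<exists>P i1 i2 p1 p2. P \<in> Obj C \<and>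
        i1 \<in> Hom C X P \<and> i2 \<in> Hom C Y P \<and> p1 \<in> Hom C P X \<and> p2 \<in> Hom C P Y \<and>
        comp C p1 i1 = ident C X \<and> comp C p2 i2 = ident C Y \<and>
        comp C p1 i2 = hzero C Y X \<and> comp C p2 i1 = hzero C X Y \<and>
        hadd C (comp C i1 p1) (comp C i2 p2) = ident C P) \<and>
     \<comment> \<open>kernels and cokernels exist\<close>
     (\<forall>X Y f. f \<in> Hom C X Y \<longrightarrow> (\<exists>K k. is_kernel C X Y f K k) \<and> (\<exists>Q q. is_cokernel C X Y f Q q)) \<and>
     \<comment> \<open>every mono is a kernel, every epi is a cokernel\<close>
     (\<forall>X Y m. is_mono C X Y m \<longrightarrow> (\<exists>Z g. g \<in> Hom C Y Z \<and> is_kernel C Y Z g X m)) \<and>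
     (\<forall>X Y e. is_epi C X Y e \<longrightarrow> (\<exists>Z g. g \<in> Hom C Z X \<and> is_cokernel C Z X g Y e))"

definition lin_map :: "('r, 'x) ring_scheme \<Rightarrow> ('r, 'v) module \<Rightarrow> ('r, 'v) module \<Rightarrow> ('v \<Rightarrow> 'v) \<Rightarrow> bool" where
  "lin_map R M N h \<longleftrightarrow> (\<forall>x \<in> carrier M. h x \<in> carrier N) \<and>
     (\<forall>x \<in> carrier M. \<forall>y \<in> carrier M. h (x \<oplus>\<^bsub>M\<^esub> y) = h x \<oplus>\<^bsub>N\<^esub> h y) \<and>
     (\<forall>r \<in> carrier R. \<forall>x \<in> carrier M. h (r \<odot>\<^bsub>M\<^esub> x) = r \<odot>\<^bsub>N\<^esub> h x)"

definition finitely_generated :: "('r, 'x) ring_scheme \<Rightarrow> ('r, 'v) module \<Rightarrow> bool" where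
  "finitely_generated R M \<longleftrightarrow> (\<exists>S. finite S \<and> S \<subseteq> carrier M \<and>
     (\<forall>x \<in> carrier M. \<exists>c. c \<in> S \<rightarrow> carrier R \<and> x = finsum M (\<lambda>s. c s \<odot>\<^bsub>M\<^esub> s) S))"

definition is_fiber_functor ::
  "('r, 'x) ring_scheme \<Rightarrow> ('o, 'm, 'r) lincat \<Rightarrow> ('o \<Rightarrow> ('r, 'v) module) \<Rightarrow> ('m \<Rightarrow> 'v \<Rightarrow> 'v) \<Rightarrow> bool" where
  "is_fiber_functor R C TO TM \<longleftrightarrow>
     \<comment> \<open>values are finitely generated R-modules\<close>
     (\<forall>X \<in> Obj C. module R (TO X) \<and> finitely_generated R (TO X)) \<and>
     \<comment> \<open>functor\<close>
     (\<forall>X Y f. f \<in> Hom C X Y \<longrightarrow> lin_map R (TO X) (TO Y) (TM f)) \<and>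
     (\<forall>X \<in> Obj C. \<forall>v \<in> carrier (TO X). TM (ident C X) v = v) \<and>
     (\<forall>X Y Z f g. f \<in> Hom C X Y \<and> g \<in> Hom C Y Z \<longrightarrow>
        (\<forall>v \<in> carrier (TO X). TM (comp C g f) v = TM g (TM f v))) \<and>
     \<comment> \<open>R-linear\<close>
     (\<forall>X Y f g. f \<in> Hom C X Y \<and> g \<in> Hom C X Y \<longrightarrow>
        (\<forall>v \<in> carrier (TO X). TM (hadd C f g) v = TM f v \<oplus>\<^bsub>TO Y\<^esub> TM g v)) \<and>
     (\<forall>X Y f r. f \<in> Hom C X Y \<and> r \<in> carrier R \<longrightarrow>
        (\<forall>v \<in> carrier (TO X). TM (hsmult C r f) v = r \<odot>\<^bsub>TO Y\<^esub> TM f v)) \<and>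
     \<comment> \<open>faithful\<close>
     (\<forall>X Y f g. f \<in> Hom C X Y \<and> g \<in> Hom C X Y \<and> (\<forall>v \<in> carrier (TO X). TM f v = TM g v) \<longrightarrow> f = g) \<and>
     \<comment> \<open>exact: short exact sequences go to short exact sequences\<close>
     (\<forall>X Y Z f g. f \<in> Hom C X Y \<and> g \<in> Hom C Y Z \<and> is_kernel C Y Z g X f \<and> is_cokernel C X Y f Z g \<longrightarrow>
        inj_on (TM f) (carrier (TO X)) \<and> TM g ` carrier (TO Y) = carrier (TO Z) \<and>
        {y \<in> carrier (TO Y). TM g y = \<zero>\<^bsub>TO Z\<^esub>} = TM f ` carrier (TO X))"

text \<open>Elements of End(T_F): families (e_p)_{p \<in> F} of R-linear endomorphisms of T p
  compatible with all edges (morphisms) between objects of F.\<close>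
definition End_TF ::
  "('r, 'x) ring_scheme \<Rightarrow> ('o, 'm, 'r) lincat \<Rightarrow> ('o \<Rightarrow> ('r, 'v) module) \<Rightarrow> ('m \<Rightarrow> 'v \<Rightarrow> 'v)
     \<Rightarrow> 'o set \<Rightarrow> ('o \<Rightarrow> 'v \<Rightarrow> 'v) set" where
  "End_TF R C TO TM F = {e. (\<forall>p \<in> F. lin_map R (TO p) (TO p) (e p)) \<and>
     (\<forall>p \<in> F. \<forall>q \<in> F. \<forall>m \<in> Hom C p q. \<forall>v \<in> carrier (TO p). TM m (e p v) = e q (TM m v))}"

text \<open>Morphisms T-tilde X \<rightarrow> T-tilde Y in the direct limit category C(T): maps TX \<rightarrow> TY that are
  End(T_F)-linear for some finite full subdiagram F containing X and Y.\<close>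
definition CT_hom ::
  "('r, 'x) ring_scheme \<Rightarrow> ('o, 'm, 'r) lincat \<Rightarrow> ('o \<Rightarrow> ('r, 'v) module) \<Rightarrow> ('m \<Rightarrow> 'v \<Rightarrow> 'v)
     \<Rightarrow> 'o \<Rightarrow> 'o \<Rightarrow> ('v \<Rightarrow> 'v) set" where
  "CT_hom R C TO TM X Y = {\<phi>. \<exists>F. finite F \<and> F \<subseteq> Obj C \<and> X \<in> F \<and> Y \<in> F \<and>
     lin_map R (TO X) (TO Y) \<phi> \<and>
     (\<forall>e \<in> End_TF R C TO TM F. \<forall>v \<in> carrier (TO X). \<phi> (e X v) = e Y (\<phi> v))}"

definition Ttilde_full ::
  "('r, 'x) ring_scheme \<Rightarrow> ('o, 'm, 'r) lincat \<Rightarrow> ('o \<Rightarrow> ('r, 'v) module) \<Rightarrow> ('m \<Rightarrow> 'v \<Rightarrow> 'v) \<Rightarrow> bool" where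
  "Ttilde_full R C TO TM \<longleftrightarrow> (\<forall>X \<in> Obj C. \<forall>Y \<in> Obj C. \<forall>\<phi> \<in> CT_hom R C TO TM X Y.
     \<exists>g \<in> Hom C X Y. \<forall>v \<in> carrier (TO X). TM g v = \<phi> v)"

end

theory Submission
  imports Defs
begin

definition subm :: "('r,'x) ring_scheme \<Rightarrow> ('r,'v,'z) module_scheme \<Rightarrow> 'v set \<Rightarrow> bool" where
  "subm R M N \<longleftrightarrow> N \<subseteq> carrier M \<and> \<zero>\<^bsub>M\<^esub> \<in> N \<and> (\<forall>a\<in>N. \<forall>b\<in>N. a \<oplus>\<^bsub>M\<^esub> b \<in> N)
     \<and> (\<forall>r\<in>carrier R. \<forall>a\<in>N. r \<odot>\<^bsub>M\<^esub> a \<in> N)"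

inductive_set mspan :: "('r,'x) ring_scheme \<Rightarrow> ('r,'v,'z) module_scheme \<Rightarrow> 'v set \<Rightarrow> 'v set"
  for R M S where
  span_zero: "\<zero>\<^bsub>M\<^esub> \<in> mspan R M S"
| span_gen: "s \<in> S \<Longrightarrow> s \<in> mspan R M S"
| span_add: "a \<in> mspan R M S \<Longrightarrow> b \<in> mspan R M S \<Longrightarrow> a \<oplus>\<^bsub>M\<^esub> b \<in> mspan R M S"
| span_smult: "r \<in> carrier R \<Longrightarrow> a \<in> mspan R M S \<Longrightarrow> r \<odot>\<^bsub>M\<^esub> a \<in> mspan R M S"

lemma span_least: assumes "subm R M N" "S \<subseteq> N" shows "mspan R M S \<subseteq> N"
proof
  fix x assume "x \<in> mspan R M S"
  then show "x \<in> N" by (induction rule: mspan.induct) (use assms in \<open>auto simp: subm_def\<close>)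
qed

lemma span_mono: assumes "S \<subseteq> S'" shows "mspan R M S \<subseteq> mspan R M S'"
proof
  fix x assume "x \<in> mspan R M S"
  then show "x \<in> mspan R M S'" by (induction rule: mspan.induct) (use assms in \<open>auto intro: mspan.span_zero mspan.span_add mspan.span_smult mspan.span_gen\<close>)
qed

context abelian_group begin
lemma ag1: assumes "y \<in> carrier G" "y' \<in> carrier G" "z \<in> carrier G"
  shows "(y \<ominus> y') \<oplus> (z \<oplus> y') = z \<oplus> y"
proof -
  have "(y \<ominus> y') \<oplus> (z \<oplus> y') = y \<oplus> (\<ominus> y' \<oplus> (y' \<oplus> z))"
    using assms by (simp add: a_minus_def a_ac)
  also have "\<dots> = y \<oplus> z" using assms by (simp add: r_neg1)
  finally show ?thesis using assms by (simp add: a_comm)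
qed
lemma ag2: assumes "y \<in> carrier G" "y' \<in> carrier G" "z \<in> carrier G"
  shows "(z \<oplus> y) \<ominus> (z \<oplus> y') = y \<ominus> y'"
proof -
  have "(z \<oplus> y) \<ominus> (z \<oplus> y') = y \<oplus> (z \<oplus> (\<ominus> z \<oplus> \<ominus> y'))"
    using assms by (simp add: a_minus_def minus_add a_ac)
  also have "\<dots> = y \<ominus> y'" using assms by (simp add: r_neg2 a_minus_def)
  finally show ?thesis .
qed
lemma ag_eq: assumes "x \<in> carrier G" "y \<in> carrier G" "x \<ominus> y = \<zero>"
  shows "x = y"
  using ag1[OF assms(1,2) zero_closed] assms by simp

end

context module
begin

lemma span_subm: "S \<subseteq> carrier M \<Longrightarrow> subm R M (mspan R M S)"
proof -
  assume S: "S \<subseteq> carrier M"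
  have "mspan R M S \<subseteq> carrier M"
  proof
    fix x assume "x \<in> mspan R M S" then show "x \<in> carrier M"
      by (induction rule: mspan.induct) (use S in auto)
  qed
  then show ?thesis unfolding subm_def by (auto intro: mspan.span_zero mspan.span_add mspan.span_smult)
qed

lemma span_carrier: "S \<subseteq> carrier M \<Longrightarrow> mspan R M S \<subseteq> carrier M"
  using span_subm[unfolded subm_def] by (simp only:)

lemma subm_neg: "subm R M N \<Longrightarrow> a \<in> N \<Longrightarrow> \<ominus>\<^bsub>M\<^esub> a \<in> N"
proof -
  assume N: "subm R M N" and a: "a \<in> N"
  then have ac: "a \<in> carrier M" by (auto simp: subm_def)
  have "(\<ominus>\<^bsub>R\<^esub> \<one>\<^bsub>R\<^esub>) \<odot>\<^bsub>M\<^esub> a \<in> N" using N a by (auto simp: subm_def)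
  moreover have "(\<ominus>\<^bsub>R\<^esub> \<one>\<^bsub>R\<^esub>) \<odot>\<^bsub>M\<^esub> a = \<ominus>\<^bsub>M\<^esub> a"
    using ac by (simp add: smult_l_minus)
  ultimately show ?thesis by simp
qed

lemma subm_minus: "subm R M N \<Longrightarrow> a \<in> N \<Longrightarrow> b \<in> N \<Longrightarrow> a \<ominus>\<^bsub>M\<^esub> b \<in> N"
proof -
  assume N: "subm R M N" and ab: "a \<in> N" "b \<in> N"
  have "\<ominus>\<^bsub>M\<^esub> b \<in> N" using N ab(2) by (rule subm_neg)
  then show ?thesis using N ab unfolding a_minus_def subm_def by simp
qed

lemma span_insert:
  assumes G: "G \<subseteq> carrier M" and x: "x \<in> carrier M"
  shows "mspan R M (insert x G) \<subseteq> {r \<odot>\<^bsub>M\<^esub> x \<oplus>\<^bsub>M\<^esub> y | r y. r \<in> carrier R \<and> y \<in> mspan R M G}"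
proof (rule span_least)
  let ?N = "{r \<odot>\<^bsub>M\<^esub> x \<oplus>\<^bsub>M\<^esub> y | r y. r \<in> carrier R \<and> y \<in> mspan R M G}"
  have sc: "mspan R M G \<subseteq> carrier M" using span_carrier G by blast
  show "subm R M ?N"
    unfolding subm_def
  proof (intro conjI ballI)
    show "?N \<subseteq> carrier M" using sc x by auto
    show "\<zero>\<^bsub>M\<^esub> \<in> ?N"
      by (rule CollectI, rule exI[of _ "\<zero>\<^bsub>R\<^esub>"], rule exI[of _ "\<zero>\<^bsub>M\<^esub>"])
        (use x in \<open>auto intro: mspan.span_zero\<close>)
    fix a b assume "a \<in> ?N" "b \<in> ?N"
    then obtain r y r' y' where a: "a = r \<odot>\<^bsub>M\<^esub> x \<oplus>\<^bsub>M\<^esub> y" "r \<in> carrier R" "y \<in> mspan R M G"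
      and b: "b = r' \<odot>\<^bsub>M\<^esub> x \<oplus>\<^bsub>M\<^esub> y'" "r' \<in> carrier R" "y' \<in> mspan R M G" by blast
    have yc: "y \<in> carrier M" "y' \<in> carrier M" using a b sc by auto
    have "a \<oplus>\<^bsub>M\<^esub> b = (r \<oplus>\<^bsub>R\<^esub> r') \<odot>\<^bsub>M\<^esub> x \<oplus>\<^bsub>M\<^esub> (y \<oplus>\<^bsub>M\<^esub> y')"
      using a b yc x by (simp add: smult_l_distr a_ac)
    moreover have "y \<oplus>\<^bsub>M\<^esub> y' \<in> mspan R M G" using a b by (simp add: mspan.span_add)
    ultimately show "a \<oplus>\<^bsub>M\<^esub> b \<in> ?N" using a b by blast
  next
    fix s a assume s: "s \<in> carrier R" and "a \<in> ?N"
    then obtain r y where a: "a = r \<odot>\<^bsub>M\<^esub> x \<oplus>\<^bsub>M\<^esub> y" "r \<in> carrier R" "y \<in> mspan R M G" by blast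
    have yc: "y \<in> carrier M" using a sc by auto
    have "s \<odot>\<^bsub>M\<^esub> a = (s \<otimes>\<^bsub>R\<^esub> r) \<odot>\<^bsub>M\<^esub> x \<oplus>\<^bsub>M\<^esub> (s \<odot>\<^bsub>M\<^esub> y)"
      using a yc x s by (simp add: smult_r_distr smult_assoc1)
    moreover have "s \<odot>\<^bsub>M\<^esub> y \<in> mspan R M G" using a s by (simp add: mspan.span_smult)
    ultimately show "s \<odot>\<^bsub>M\<^esub> a \<in> ?N" using a s by blast
  qed
  show "insert x G \<subseteq> ?N"
  proof
    fix z assume "z \<in> insert x G"
    then show "z \<in> ?N"
    proof
      assume "z = x" then show ?thesis
        by (intro CollectI exI[of _ "\<one>\<^bsub>R\<^esub>"] exI[of _ "\<zero>\<^bsub>M\<^esub>"]) (use x in \<open>auto intro: mspan.span_zero\<close>)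
    next
      assume "z \<in> G" then show ?thesis
        by (intro CollectI exI[of _ "\<zero>\<^bsub>R\<^esub>"] exI[of _ z]) (use G x in \<open>auto intro: mspan.span_zero mspan.span_gen\<close>)
    qed
  qed
qed


lemma ideal_of_subm:
  assumes P: "subm R M P" and SG: "subm R M SG" and x: "x \<in> carrier M"
  shows "ideal {r \<in> carrier R. \<exists>y\<in>SG. r \<odot>\<^bsub>M\<^esub> x \<oplus>\<^bsub>M\<^esub> y \<in> P} R"
proof (rule idealI)
  let ?I = "{r \<in> carrier R. \<exists>y\<in>SG. r \<odot>\<^bsub>M\<^esub> x \<oplus>\<^bsub>M\<^esub> y \<in> P}"
  have SGc: "SG \<subseteq> carrier M" using SG by (simp add: subm_def)
  show "ring R" by (rule R.ring_axioms)
  show "subgroup ?I (add_monoid R)"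
  proof (rule R.add.subgroupI)
    show "?I \<subseteq> carrier R" by auto
    have "\<zero>\<^bsub>R\<^esub> \<odot>\<^bsub>M\<^esub> x \<oplus>\<^bsub>M\<^esub> \<zero>\<^bsub>M\<^esub> \<in> P" using x P by (simp add: subm_def)
    then have "\<zero>\<^bsub>R\<^esub> \<in> ?I" using SG by (auto simp: subm_def)
    then show "?I \<noteq> {}" by blast
  next
    fix a assume "a \<in> ?I"
    then obtain y where a: "a \<in> carrier R" "y \<in> SG" "a \<odot>\<^bsub>M\<^esub> x \<oplus>\<^bsub>M\<^esub> y \<in> P" by blast
    have yc: "y \<in> carrier M" using a SGc by auto
    have "\<ominus>\<^bsub>M\<^esub> (a \<odot>\<^bsub>M\<^esub> x \<oplus>\<^bsub>M\<^esub> y) \<in> P" using subm_neg[OF P a(3)] .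
    moreover have "\<ominus>\<^bsub>M\<^esub> (a \<odot>\<^bsub>M\<^esub> x \<oplus>\<^bsub>M\<^esub> y) = (\<ominus>\<^bsub>R\<^esub> a) \<odot>\<^bsub>M\<^esub> x \<oplus>\<^bsub>M\<^esub> (\<ominus>\<^bsub>M\<^esub> y)"
      using a yc x by (simp add: smult_l_minus M.minus_add)
    moreover have "\<ominus>\<^bsub>M\<^esub> y \<in> SG" using subm_neg[OF SG a(2)] .
    ultimately show "\<ominus>\<^bsub>R\<^esub> a \<in> ?I" using a by auto
  next
    fix a b assume "a \<in> ?I" "b \<in> ?I"
    then obtain y y' where a: "a \<in> carrier R" "y \<in> SG" "a \<odot>\<^bsub>M\<^esub> x \<oplus>\<^bsub>M\<^esub> y \<in> P"
      and b: "b \<in> carrier R" "y' \<in> SG" "b \<odot>\<^bsub>M\<^esub> x \<oplus>\<^bsub>M\<^esub> y' \<in> P" by blast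
    have yc: "y \<in> carrier M" "y' \<in> carrier M" using a b SGc by auto
    have "(a \<odot>\<^bsub>M\<^esub> x \<oplus>\<^bsub>M\<^esub> y) \<oplus>\<^bsub>M\<^esub> (b \<odot>\<^bsub>M\<^esub> x \<oplus>\<^bsub>M\<^esub> y') \<in> P" using a b P by (simp add: subm_def)
    moreover have "(a \<odot>\<^bsub>M\<^esub> x \<oplus>\<^bsub>M\<^esub> y) \<oplus>\<^bsub>M\<^esub> (b \<odot>\<^bsub>M\<^esub> x \<oplus>\<^bsub>M\<^esub> y') = (a \<oplus>\<^bsub>R\<^esub> b) \<odot>\<^bsub>M\<^esub> x \<oplus>\<^bsub>M\<^esub> (y \<oplus>\<^bsub>M\<^esub> y')"
      using a b yc x by (simp add: smult_l_distr a_ac)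
    moreover have "y \<oplus>\<^bsub>M\<^esub> y' \<in> SG" using SG a b by (simp add: subm_def)
    ultimately show "a \<oplus>\<^bsub>R\<^esub> b \<in> ?I" using a b by auto
  qed
next
  have SGc: "SG \<subseteq> carrier M" using SG by (simp add: subm_def)
  fix a s assume "a \<in> {r \<in> carrier R. \<exists>y\<in>SG. r \<odot>\<^bsub>M\<^esub> x \<oplus>\<^bsub>M\<^esub> y \<in> P}" and s: "s \<in> carrier R"
  then obtain y where a: "a \<in> carrier R" "y \<in> SG" "a \<odot>\<^bsub>M\<^esub> x \<oplus>\<^bsub>M\<^esub> y \<in> P" by blast
  have yc: "y \<in> carrier M" using a SGc by auto
  have 1: "s \<odot>\<^bsub>M\<^esub> (a \<odot>\<^bsub>M\<^esub> x \<oplus>\<^bsub>M\<^esub> y) \<in> P" using a s P by (simp add: subm_def)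
  have 2: "s \<odot>\<^bsub>M\<^esub> (a \<odot>\<^bsub>M\<^esub> x \<oplus>\<^bsub>M\<^esub> y) = (s \<otimes>\<^bsub>R\<^esub> a) \<odot>\<^bsub>M\<^esub> x \<oplus>\<^bsub>M\<^esub> (s \<odot>\<^bsub>M\<^esub> y)"
    using a yc x s by (simp add: smult_r_distr smult_assoc1)
  have 3: "s \<odot>\<^bsub>M\<^esub> y \<in> SG" using SG a s by (simp add: subm_def)
  show "s \<otimes>\<^bsub>R\<^esub> a \<in> {r \<in> carrier R. \<exists>y\<in>SG. r \<odot>\<^bsub>M\<^esub> x \<oplus>\<^bsub>M\<^esub> y \<in> P}"
    using 1 2 3 a s by auto
  show "a \<otimes>\<^bsub>R\<^esub> s \<in> {r \<in> carrier R. \<exists>y\<in>SG. r \<odot>\<^bsub>M\<^esub> x \<oplus>\<^bsub>M\<^esub> y \<in> P}"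
    using 1 2 3 a s by (auto simp: R.m_comm)
qed

lemma subm_inter: "subm R M A \<Longrightarrow> subm R M B \<Longrightarrow> subm R M (A \<inter> B)"
  unfolding subm_def by auto

lemma noeth_fg:
  assumes noeth: "noetherian_ring R" and fin: "finite G" and G: "G \<subseteq> carrier M"
  shows "subm R M N \<Longrightarrow> N \<subseteq> mspan R M G \<Longrightarrow> \<exists>B. finite B \<and> B \<subseteq> N \<and> N \<subseteq> mspan R M B"
  using fin G
proof (induction G arbitrary: N rule: finite_induct)
  case empty
  have "subm R M {\<zero>\<^bsub>M\<^esub>}" unfolding subm_def by auto
  then have "mspan R M {} \<subseteq> {\<zero>\<^bsub>M\<^esub>}" by (rule span_least) auto
  then have "N \<subseteq> mspan R M {}" using empty by (auto intro: mspan.span_zero)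
  then show ?case by blast
next
  case (insert x G)
  note N = insert.prems(1)
  have x: "x \<in> carrier M" and Gc: "G \<subseteq> carrier M" using insert by auto
  define SG where "SG = mspan R M G"
  have SGs: "subm R M SG" unfolding SG_def using span_subm[OF Gc] .
  have SGc: "SG \<subseteq> carrier M" using SGs by (simp add: subm_def)
  define I where "I = {r \<in> carrier R. \<exists>y\<in>SG. r \<odot>\<^bsub>M\<^esub> x \<oplus>\<^bsub>M\<^esub> y \<in> N}"
  have "ideal I R" unfolding I_def by (rule ideal_of_subm[OF N SGs x])
  then obtain A where A: "A \<subseteq> carrier R" "finite A" "I = Idl\<^bsub>R\<^esub> A"
    using noetherian_ring.finetely_gen[OF noeth] by blast
  have AI: "A \<subseteq> I" using A R.genideal_self by auto
  define ya where "ya a = (SOME y. y \<in> SG \<and> a \<odot>\<^bsub>M\<^esub> x \<oplus>\<^bsub>M\<^esub> y \<in> N)" for a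
  have ya: "ya a \<in> SG \<and> a \<odot>\<^bsub>M\<^esub> x \<oplus>\<^bsub>M\<^esub> ya a \<in> N" if "a \<in> A" for a
  proof -
    have "\<exists>y. y \<in> SG \<and> a \<odot>\<^bsub>M\<^esub> x \<oplus>\<^bsub>M\<^esub> y \<in> N" using AI that unfolding I_def by blast
    then show ?thesis unfolding ya_def by (rule someI_ex)
  qed
  define Z where "Z = (\<lambda>a. a \<odot>\<^bsub>M\<^esub> x \<oplus>\<^bsub>M\<^esub> ya a) ` A"
  have N0: "subm R M (N \<inter> SG)" by (rule subm_inter[OF N SGs])
  obtain B0 where B0: "finite B0" "B0 \<subseteq> N \<inter> SG" "N \<inter> SG \<subseteq> mspan R M B0"
    using insert.IH[OF N0 _ Gc] SG_def by blast
  define B where "B = B0 \<union> Z"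
  have Bfin: "finite B" unfolding B_def Z_def using B0 A by auto
  have BN: "B \<subseteq> N" unfolding B_def Z_def using B0 ya by auto
  have Nc: "N \<subseteq> carrier M" using N by (simp add: subm_def)
  have SB: "subm R M (mspan R M B)" using span_subm BN Nc by blast
  have SBN: "mspan R M B \<subseteq> N" using span_least[OF N BN] .
  define J where "J = {r \<in> carrier R. \<exists>y\<in>SG. r \<odot>\<^bsub>M\<^esub> x \<oplus>\<^bsub>M\<^esub> y \<in> mspan R M B}"
  have "ideal J R" unfolding J_def by (rule ideal_of_subm[OF SB SGs x])
  moreover have "A \<subseteq> J"
  proof
    fix a assume a: "a \<in> A"
    have "a \<odot>\<^bsub>M\<^esub> x \<oplus>\<^bsub>M\<^esub> ya a \<in> B" unfolding B_def Z_def using a by auto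
    then show "a \<in> J" unfolding J_def using a A ya by (auto intro: mspan.span_gen)
  qed
  ultimately have IJ: "I \<subseteq> J" using A R.genideal_minimal by blast
  show ?case
  proof (intro exI conjI)
    show "finite B" "B \<subseteq> N" by (fact Bfin, fact BN)
    show "N \<subseteq> mspan R M B"
    proof
      fix n assume n: "n \<in> N"
      then have "n \<in> mspan R M (insert x G)" using insert.prems by auto
      then obtain r y where ry: "n = r \<odot>\<^bsub>M\<^esub> x \<oplus>\<^bsub>M\<^esub> y" "r \<in> carrier R" "y \<in> SG"
        using span_insert[OF Gc x] SG_def by blast
      then have "r \<in> I" unfolding I_def using n by auto
      then have "r \<in> J" using IJ by auto
      then obtain y' where y': "y' \<in> SG" "r \<odot>\<^bsub>M\<^esub> x \<oplus>\<^bsub>M\<^esub> y' \<in> mspan R M B" unfolding J_def by blast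
      have yc: "y \<in> carrier M" "y' \<in> carrier M" using ry y' SGc by auto
      define w where "w = r \<odot>\<^bsub>M\<^esub> x \<oplus>\<^bsub>M\<^esub> y'"
      have nd: "n = (y \<ominus>\<^bsub>M\<^esub> y') \<oplus>\<^bsub>M\<^esub> w"
        unfolding w_def ry(1) using yc x ry(2) by (simp add: M.ag1)
      have "w \<in> N" using y' SBN w_def by auto
      have "y \<ominus>\<^bsub>M\<^esub> y' \<in> SG" using subm_minus[OF SGs ry(3) y'(1)] .
      moreover have "n \<ominus>\<^bsub>M\<^esub> w \<in> N" using subm_minus[OF N n \<open>w \<in> N\<close>] .
      moreover have "n \<ominus>\<^bsub>M\<^esub> w = y \<ominus>\<^bsub>M\<^esub> y'"
        unfolding w_def ry(1) using yc x ry(2) by (simp add: M.ag2)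
      ultimately have "y \<ominus>\<^bsub>M\<^esub> y' \<in> mspan R M B0" using B0 by auto
      then have "y \<ominus>\<^bsub>M\<^esub> y' \<in> mspan R M B" using span_mono[of B0 B] B_def by auto
      moreover have "w \<in> mspan R M B" using y' w_def by simp
      ultimately show "n \<in> mspan R M B" using nd by (simp add: mspan.span_add)
    qed
  qed
qed

lemma finsum_in_span:
  assumes S: "S \<subseteq> carrier M"
  shows "finite A \<Longrightarrow> f \<in> A \<rightarrow> mspan R M S \<Longrightarrow> finsum M f A \<in> mspan R M S"
proof (induction A rule: finite_induct)
  case empty then show ?case by (simp add: mspan.span_zero)
next
  case (insert a A)
  have fc: "f \<in> insert a A \<rightarrow> carrier M" using insert.prems span_carrier[OF S] by blast
  then have "finsum M f (insert a A) = f a \<oplus>\<^bsub>M\<^esub> finsum M f A"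
    using insert by (simp add: M.finsum_insert)
  moreover have "f a \<in> mspan R M S" using insert.prems by auto
  moreover have "finsum M f A \<in> mspan R M S" using insert by auto
  ultimately show ?case by (simp add: mspan.span_add)
qed

end

lemma fg_span:
  fixes M :: "('r,'v) module"
  assumes mod: "module R M" and "finitely_generated R M"
  shows "\<exists>G. finite G \<and> G \<subseteq> carrier M \<and> carrier M \<subseteq> mspan R M G"
proof -
  interpret module R M by fact
  obtain S where S: "finite S" "S \<subseteq> carrier M"
    "\<forall>x \<in> carrier M. \<exists>c. c \<in> S \<rightarrow> carrier R \<and> x = finsum M (\<lambda>s. c s \<odot>\<^bsub>M\<^esub> s) S"
    using assms unfolding finitely_generated_def by blast
  have "carrier M \<subseteq> mspan R M S"
  proof
    fix x assume "x \<in> carrier M"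
    then obtain c where c: "c \<in> S \<rightarrow> carrier R" "x = finsum M (\<lambda>s. c s \<odot>\<^bsub>M\<^esub> s) S" using S by blast
    have "(\<lambda>s. c s \<odot>\<^bsub>M\<^esub> s) \<in> S \<rightarrow> mspan R M S"
      using c(1) by (auto intro: mspan.span_smult mspan.span_gen)
    then show "x \<in> mspan R M S" using finsum_in_span[OF S(2) S(1)] c(2) by simp
  qed
  then show ?thesis using S by blast
qed


lemma lin_map_zero:
  assumes "module R M" "module R N" "lin_map R M N h"
  shows "h \<zero>\<^bsub>M\<^esub> = \<zero>\<^bsub>N\<^esub>"
proof -
  interpret M: module R M by fact
  interpret N: module R N by fact
  have l: "\<forall>r\<in>carrier R. \<forall>x\<in>carrier M. h (r \<odot>\<^bsub>M\<^esub> x) = r \<odot>\<^bsub>N\<^esub> h x"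
    using assms(3) unfolding lin_map_def by blast
  have "h (\<zero>\<^bsub>R\<^esub> \<odot>\<^bsub>M\<^esub> \<zero>\<^bsub>M\<^esub>) = \<zero>\<^bsub>R\<^esub> \<odot>\<^bsub>N\<^esub> h \<zero>\<^bsub>M\<^esub>"
    using l M.R.zero_closed M.zero_closed by blast
  moreover have "h \<zero>\<^bsub>M\<^esub> \<in> carrier N" using assms(3) unfolding lin_map_def by auto
  ultimately show ?thesis by simp
qed

lemma lin_map_finsum:
  assumes "module R M" "module R N" "lin_map R M N h" "finite A"
  shows "f \<in> A \<rightarrow> carrier M \<Longrightarrow> h (finsum M f A) = finsum N (\<lambda>a. h (f a)) A"
  using assms(4)
proof (induction A rule: finite_induct)
  case empty
  interpret M: module R M by fact
  interpret N: module R N by fact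
  show ?case using lin_map_zero[OF assms(1-3)] by simp
next
  case (insert a A)
  interpret M: module R M by fact
  interpret N: module R N by fact
  have hc: "\<And>x. x \<in> carrier M \<Longrightarrow> h x \<in> carrier N" using assms(3) unfolding lin_map_def by auto
  have ha: "\<And>x y. x \<in> carrier M \<Longrightarrow> y \<in> carrier M \<Longrightarrow> h (x \<oplus>\<^bsub>M\<^esub> y) = h x \<oplus>\<^bsub>N\<^esub> h y"
    using assms(3) unfolding lin_map_def by auto
  have "finsum M f (insert a A) = f a \<oplus>\<^bsub>M\<^esub> finsum M f A"
    using insert by (simp add: M.finsum_insert)
  then have "h (finsum M f (insert a A)) = h (f a) \<oplus>\<^bsub>N\<^esub> h (finsum M f A)"
    using insert.prems by (simp add: ha M.finsum_closed)
  also have "\<dots> = h (f a) \<oplus>\<^bsub>N\<^esub> finsum N (\<lambda>a. h (f a)) A" using insert by auto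
  also have "\<dots> = finsum N (\<lambda>a. h (f a)) (insert a A)"
    using insert hc by (subst N.finsum_insert) (auto simp: Pi_def)
  finally show ?case .
qed

lemma lin_map_image_subm:
  assumes "module R M" "module R N" "lin_map R M N h"
  shows "subm R N (h ` carrier M)"
proof -
  interpret M: module R M by fact
  interpret N: module R N by fact
  show ?thesis using assms(3) lin_map_zero[OF assms] unfolding subm_def lin_map_def
    by (auto intro!: image_eqI[of "\<zero>\<^bsub>N\<^esub>" h "\<zero>\<^bsub>M\<^esub>"]) (metis M.add.m_closed image_eqI, metis M.smult_closed image_eqI)
qed


locale fctx =
  fixes R :: "('r,'x) ring_scheme" and C :: "('o,'m,'r) lincat"
    and TO :: "'o \<Rightarrow> ('r,'v) module" and TM :: "'m \<Rightarrow> 'v \<Rightarrow> 'v"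
  assumes cr: "cring R" and noeth: "noetherian_ring R"
    and ab: "is_abelian_R_linear_category R C" and fib: "is_fiber_functor R C TO TM"
begin

lemma lincat: "is_R_linear_category R C" using ab unfolding is_abelian_R_linear_category_def by (elim conjE) (metis (no_types, lifting))
lemma cat: "is_category C" using lincat unfolding is_R_linear_category_def by (elim conjE) (metis (no_types, lifting))

lemma hom_obj: "f \<in> Hom C X Y \<Longrightarrow> X \<in> Obj C \<and> Y \<in> Obj C"
  using cat unfolding is_category_def by (elim conjE) (metis (no_types, lifting))
lemma id_hom: "X \<in> Obj C \<Longrightarrow> ident C X \<in> Hom C X X"
  using cat unfolding is_category_def by (elim conjE) (metis (no_types, lifting))
lemma comp_hom: "f \<in> Hom C X Y \<Longrightarrow> g \<in> Hom C Y Z \<Longrightarrow> comp C g f \<in> Hom C X Z"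
  using cat unfolding is_category_def by (elim conjE) (metis (no_types, lifting))
lemma assoc: "f \<in> Hom C X Y \<Longrightarrow> g \<in> Hom C Y Z \<Longrightarrow> h \<in> Hom C Z W \<Longrightarrow>
    comp C h (comp C g f) = comp C (comp C h g) f"
  using cat unfolding is_category_def by (elim conjE) (metis (no_types, lifting))
lemma id_r: "f \<in> Hom C X Y \<Longrightarrow> comp C f (ident C X) = f"
  using cat unfolding is_category_def by (elim conjE) (metis (no_types, lifting))
lemma id_l: "f \<in> Hom C X Y \<Longrightarrow> comp C (ident C Y) f = f"
  using cat unfolding is_category_def by (elim conjE) (metis (no_types, lifting))

lemma hmod: "X \<in> Obj C \<Longrightarrow> Y \<in> Obj C \<Longrightarrow> module R (hom_module C X Y)"
  using lincat unfolding is_R_linear_category_def by (elim conjE) (metis (no_types, lifting))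

lemma hom_module_simps[simp]: "carrier (hom_module C X Y) = Hom C X Y"
  "zero (hom_module C X Y) = hzero C X Y" "add (hom_module C X Y) = hadd C"
  "smult (hom_module C X Y) = hsmult C"
  unfolding hom_module_def by simp_all

lemma hzero_hom: "X \<in> Obj C \<Longrightarrow> Y \<in> Obj C \<Longrightarrow> hzero C X Y \<in> Hom C X Y"
proof -
  assume "X \<in> Obj C" "Y \<in> Obj C"
  then interpret H: module R "hom_module C X Y" by (rule hmod)
  show ?thesis using H.zero_closed by simp
qed
lemma hadd_hom: "f \<in> Hom C X Y \<Longrightarrow> g \<in> Hom C X Y \<Longrightarrow> hadd C f g \<in> Hom C X Y"
proof -
  assume a: "f \<in> Hom C X Y" "g \<in> Hom C X Y"
  then interpret H: module R "hom_module C X Y" using hmod hom_obj by blast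
  show ?thesis using H.a_closed[of f g] a by simp
qed
lemma hsmult_hom: "r \<in> carrier R \<Longrightarrow> f \<in> Hom C X Y \<Longrightarrow> hsmult C r f \<in> Hom C X Y"
proof -
  assume a: "r \<in> carrier R" "f \<in> Hom C X Y"
  then interpret H: module R "hom_module C X Y" using hmod hom_obj by blast
  show ?thesis using H.smult_closed[of r f] a by simp
qed

lemma Tmod: "X \<in> Obj C \<Longrightarrow> module R (TO X)"
  using fib unfolding is_fiber_functor_def by (elim conjE) (metis (no_types, lifting))
lemma Tfg: "X \<in> Obj C \<Longrightarrow> finitely_generated R (TO X)"
  using fib unfolding is_fiber_functor_def by (elim conjE) (metis (no_types, lifting))
lemma Tlin: "f \<in> Hom C X Y \<Longrightarrow> lin_map R (TO X) (TO Y) (TM f)"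
  using fib unfolding is_fiber_functor_def by (elim conjE) (metis (no_types, lifting))
lemma T_closed: "f \<in> Hom C X Y \<Longrightarrow> v \<in> carrier (TO X) \<Longrightarrow> TM f v \<in> carrier (TO Y)"
  using Tlin unfolding lin_map_def by blast
lemma T_add: "f \<in> Hom C X Y \<Longrightarrow> v \<in> carrier (TO X) \<Longrightarrow> w \<in> carrier (TO X) \<Longrightarrow>
    TM f (v \<oplus>\<^bsub>TO X\<^esub> w) = TM f v \<oplus>\<^bsub>TO Y\<^esub> TM f w"
  using Tlin unfolding lin_map_def by blast
lemma T_smult: "f \<in> Hom C X Y \<Longrightarrow> r \<in> carrier R \<Longrightarrow> v \<in> carrier (TO X) \<Longrightarrow>
    TM f (r \<odot>\<^bsub>TO X\<^esub> v) = r \<odot>\<^bsub>TO Y\<^esub> TM f v"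
  using Tlin unfolding lin_map_def by blast
lemma T_id: "X \<in> Obj C \<Longrightarrow> v \<in> carrier (TO X) \<Longrightarrow> TM (ident C X) v = v"
  using fib unfolding is_fiber_functor_def by (elim conjE) (metis (no_types, lifting))
lemma T_comp: "f \<in> Hom C X Y \<Longrightarrow> g \<in> Hom C Y Z \<Longrightarrow> v \<in> carrier (TO X) \<Longrightarrow>
    TM (comp C g f) v = TM g (TM f v)"
  using fib unfolding is_fiber_functor_def by (elim conjE) (metis (no_types, lifting))
lemma T_hadd: "f \<in> Hom C X Y \<Longrightarrow> g \<in> Hom C X Y \<Longrightarrow> v \<in> carrier (TO X) \<Longrightarrow>
    TM (hadd C f g) v = TM f v \<oplus>\<^bsub>TO Y\<^esub> TM g v"
  using fib unfolding is_fiber_functor_def by (elim conjE) (metis (no_types, lifting))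
lemma T_hsmult: "f \<in> Hom C X Y \<Longrightarrow> r \<in> carrier R \<Longrightarrow> v \<in> carrier (TO X) \<Longrightarrow>
    TM (hsmult C r f) v = r \<odot>\<^bsub>TO Y\<^esub> TM f v"
  using fib unfolding is_fiber_functor_def by (elim conjE) (metis (no_types, lifting))
lemma faithful: "f \<in> Hom C X Y \<Longrightarrow> g \<in> Hom C X Y \<Longrightarrow> (\<And>v. v \<in> carrier (TO X) \<Longrightarrow> TM f v = TM g v) \<Longrightarrow> f = g"
  using fib unfolding is_fiber_functor_def by (elim conjE) (metis (no_types, lifting))
lemma exact: "f \<in> Hom C X Y \<Longrightarrow> g \<in> Hom C Y Z \<Longrightarrow> is_kernel C Y Z g X f \<Longrightarrow> is_cokernel C X Y f Z g \<Longrightarrow>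
        inj_on (TM f) (carrier (TO X)) \<and> TM g ` carrier (TO Y) = carrier (TO Z) \<and>
        {y \<in> carrier (TO Y). TM g y = \<zero>\<^bsub>TO Z\<^esub>} = TM f ` carrier (TO X)"
  using fib unfolding is_fiber_functor_def by (elim conjE) (metis (no_types, lifting))

lemma T_zero_vec: "f \<in> Hom C X Y \<Longrightarrow> TM f \<zero>\<^bsub>TO X\<^esub> = \<zero>\<^bsub>TO Y\<^esub>"
  using lin_map_zero[OF Tmod Tmod Tlin] hom_obj by blast

lemma T_hzero: assumes "X \<in> Obj C" "Y \<in> Obj C" "v \<in> carrier (TO X)"
  shows "TM (hzero C X Y) v = \<zero>\<^bsub>TO Y\<^esub>"
proof -
  interpret H: module R "hom_module C X Y" using hmod assms by blast
  interpret TY: module R "TO Y" using Tmod assms by blast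
  have z: "hzero C X Y \<in> Hom C X Y" using hzero_hom assms by blast
  have "hsmult C \<zero>\<^bsub>R\<^esub> (hzero C X Y) = hzero C X Y"
    using H.smult_l_null[of "hzero C X Y"] z by simp
  then have "TM (hzero C X Y) v = TM (hsmult C \<zero>\<^bsub>R\<^esub> (hzero C X Y)) v" by simp
  also have "\<dots> = \<zero>\<^bsub>R\<^esub> \<odot>\<^bsub>TO Y\<^esub> TM (hzero C X Y) v" using T_hsmult[OF z _ assms(3)] by simp
  also have "\<dots> = \<zero>\<^bsub>TO Y\<^esub>" using T_closed[OF z assms(3)] by simp
  finally show ?thesis .
qed

lemma comp_zero_r: assumes "g \<in> Hom C Y Z" "X \<in> Obj C"
  shows "comp C g (hzero C X Y) = hzero C X Z"
proof -
  have o: "Y \<in> Obj C" "Z \<in> Obj C" using hom_obj assms by auto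
  show ?thesis
    by (rule faithful[OF comp_hom[OF hzero_hom[OF assms(2) o(1)] assms(1)] hzero_hom[OF assms(2) o(2)]])
      (simp add: T_comp[OF hzero_hom[OF assms(2) o(1)] assms(1)] T_hzero assms o T_zero_vec)
qed

lemma comp_zero_l: assumes "f \<in> Hom C X Y" "Z \<in> Obj C"
  shows "comp C (hzero C Y Z) f = hzero C X Z"
proof -
  have o: "X \<in> Obj C" "Y \<in> Obj C" using hom_obj assms by auto
  show ?thesis
    by (rule faithful[OF comp_hom[OF assms(1) hzero_hom[OF o(2) assms(2)]] hzero_hom[OF o(1) assms(2)]])
      (simp add: T_comp[OF assms(1) hzero_hom[OF o(2) assms(2)]] T_hzero assms o T_closed[OF assms(1)])
qed

definition hsub where "hsub f g = hadd C f (hsmult C (\<ominus>\<^bsub>R\<^esub> \<one>\<^bsub>R\<^esub>) g)"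

lemma hsub_hom: "f \<in> Hom C X Y \<Longrightarrow> g \<in> Hom C X Y \<Longrightarrow> hsub f g \<in> Hom C X Y"
  unfolding hsub_def using cr cring.axioms(1) ring.ring_simprules(3,6)
  by (metis hadd_hom hsmult_hom)

lemma T_hsub: assumes "f \<in> Hom C X Y" "g \<in> Hom C X Y" "v \<in> carrier (TO X)"
  shows "TM (hsub f g) v = TM f v \<ominus>\<^bsub>TO Y\<^esub> TM g v"
proof -
  interpret TY: module R "TO Y" using Tmod hom_obj assms by blast
  have m: "\<ominus>\<^bsub>R\<^esub> \<one>\<^bsub>R\<^esub> \<in> carrier R" by simp
  show ?thesis unfolding hsub_def
    using T_hadd[OF assms(1) hsmult_hom[OF m assms(2)] assms(3)] T_hsmult[OF assms(2) m assms(3)]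
      T_closed[OF assms(2,3)]
    by (simp add: TY.smult_l_minus a_minus_def)
qed

end


context fctx
begin

lemma ab_kc: "\<forall>X Y f. f \<in> Hom C X Y \<longrightarrow> (\<exists>K k. is_kernel C X Y f K k) \<and> (\<exists>Q q. is_cokernel C X Y f Q q)"
  by (rule ab[unfolded is_abelian_R_linear_category_def, THEN conjunct2, THEN conjunct2, THEN conjunct2, THEN conjunct1])
lemma ab_m: "\<forall>X Y m. is_mono C X Y m \<longrightarrow> (\<exists>Z g. g \<in> Hom C Y Z \<and> is_kernel C Y Z g X m)"
  by (rule ab[unfolded is_abelian_R_linear_category_def, THEN conjunct2, THEN conjunct2, THEN conjunct2, THEN conjunct2, THEN conjunct1])
lemma ab_e: "\<forall>X Y e. is_epi C X Y e \<longrightarrow> (\<exists>Z g. g \<in> Hom C Z X \<and> is_cokernel C Z X g Y e)"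
  by (rule ab[unfolded is_abelian_R_linear_category_def, THEN conjunct2, THEN conjunct2, THEN conjunct2, THEN conjunct2, THEN conjunct2])
lemma ab_ker: "f \<in> Hom C X Y \<Longrightarrow> \<exists>K k. is_kernel C X Y f K k"
  using ab_kc by blast
lemma ab_coker: "f \<in> Hom C X Y \<Longrightarrow> \<exists>Q q. is_cokernel C X Y f Q q"
  using ab_kc by blast
lemma ab_mono: "is_mono C X Y m \<Longrightarrow> \<exists>Z g. g \<in> Hom C Y Z \<and> is_kernel C Y Z g X m"
  using ab_m by blast
lemma ab_epi: "is_epi C X Y e \<Longrightarrow> \<exists>Z g. g \<in> Hom C Z X \<and> is_cokernel C Z X g Y e"
  using ab_e by blast

lemma kerD: "is_kernel C X Y f K k \<Longrightarrow> K \<in> Obj C \<and> k \<in> Hom C K X \<and> comp C f k = hzero C K Y"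
  unfolding is_kernel_def by (elim conjE) (intro conjI)
lemma kerU: "is_kernel C X Y f K k \<Longrightarrow> W \<in> Obj C \<Longrightarrow> h \<in> Hom C W X \<Longrightarrow> comp C f h = hzero C W Y \<Longrightarrow>
    \<exists>!u. u \<in> Hom C W K \<and> comp C k u = h"
  unfolding is_kernel_def by simp
lemma cokD: "is_cokernel C X Y f Q q \<Longrightarrow> Q \<in> Obj C \<and> q \<in> Hom C Y Q \<and> comp C q f = hzero C X Q"
  unfolding is_cokernel_def by (elim conjE) (intro conjI)
lemma cokU: "is_cokernel C X Y f Q q \<Longrightarrow> W \<in> Obj C \<Longrightarrow> h \<in> Hom C Y W \<Longrightarrow> comp C h f = hzero C X W \<Longrightarrow>
    \<exists>!u. u \<in> Hom C Q W \<and> comp C u q = h"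
  unfolding is_cokernel_def by simp

lemma ex1_uniq: "\<exists>!u. P u \<Longrightarrow> P a \<Longrightarrow> P b \<Longrightarrow> a = b" by blast

lemma ker_mono:
  assumes k: "is_kernel C X Y f K k" and f: "f \<in> Hom C X Y"
    and a: "a \<in> Hom C W K" and b: "b \<in> Hom C W K" and e: "comp C k a = comp C k b"
  shows "a = b"
proof -
  have kk: "K \<in> Obj C" "k \<in> Hom C K X" "comp C f k = hzero C K Y" using kerD[OF k] by auto
  have W: "W \<in> Obj C" using hom_obj a by blast
  have Y: "Y \<in> Obj C" using hom_obj f by blast
  have h: "comp C k a \<in> Hom C W X" using comp_hom a kk by blast
  have "comp C f (comp C k a) = comp C (comp C f k) a" using assoc[OF a kk(2) f] .
  also have "\<dots> = hzero C W Y" using kk(3) comp_zero_l[OF a Y] by simp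
  finally have z: "comp C f (comp C k a) = hzero C W Y" .
  from kerU[OF k W h z] have "\<exists>!u. u \<in> Hom C W K \<and> comp C k u = comp C k a" .
  then show ?thesis by (rule ex1_uniq) (use a b e in auto)
qed

lemma ker_is_mono: "is_kernel C X Y f K k \<Longrightarrow> f \<in> Hom C X Y \<Longrightarrow> is_mono C K X k"
proof -
  assume k: "is_kernel C X Y f K k" and f: "f \<in> Hom C X Y"
  show ?thesis unfolding is_mono_def
  proof (intro conjI ballI impI)
    show "k \<in> Hom C K X" using kerD[OF k] by blast
    fix W g h assume "W \<in> Obj C" "g \<in> Hom C W K" "h \<in> Hom C W K" "comp C k g = comp C k h"
    then show "g = h" using ker_mono[OF k f] by blast
  qed
qed

lemma mono_cancel: "is_mono C X Y m \<Longrightarrow> a \<in> Hom C W X \<Longrightarrow> b \<in> Hom C W X \<Longrightarrow> comp C m a = comp C m b \<Longrightarrow> a = b"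
proof -
  assume m: "is_mono C X Y m" and a: "a \<in> Hom C W X" and b: "b \<in> Hom C W X" and e: "comp C m a = comp C m b"
  have W: "W \<in> Obj C" using hom_obj a by blast
  have "\<forall>W \<in> Obj C. \<forall>g \<in> Hom C W X. \<forall>h \<in> Hom C W X. comp C m g = comp C m h \<longrightarrow> g = h"
    using m unfolding is_mono_def by (elim conjE)
  then show "a = b" using W a b e by simp
qed

lemma kernel_T:
  assumes f: "f \<in> Hom C Q Q'"
  shows "\<exists>S \<sigma>. \<sigma> \<in> Hom C S Q \<and> comp C f \<sigma> = hzero C S Q' \<and>
           (\<forall>y\<in>carrier (TO Q). TM f y = \<zero>\<^bsub>TO Q'\<^esub> \<longrightarrow> y \<in> TM \<sigma> ` carrier (TO S))"
proof -
  have Q: "Q \<in> Obj C" "Q' \<in> Obj C" using hom_obj f by auto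
  obtain D c where c: "is_cokernel C Q Q' f D c" using ab_coker[OF f] by blast
  have cc: "D \<in> Obj C" "c \<in> Hom C Q' D" "comp C c f = hzero C Q D" using cokD[OF c] by auto
  obtain I i where i: "is_kernel C Q' D c I i" using ab_ker[OF cc(2)] by blast
  have ii: "I \<in> Obj C" "i \<in> Hom C I Q'" "comp C c i = hzero C I D" using kerD[OF i] by auto
  obtain f1 where f1: "f1 \<in> Hom C Q I" "comp C i f1 = f" using ex1_implies_ex[OF kerU[OF i Q(1) f cc(3)]] by blast
  \<comment> \<open>(i, c) is short exact\<close>
  have ci: "is_cokernel C I Q' i D c"
    unfolding is_cokernel_def
  proof (intro conjI ballI impI)
    show "D \<in> Obj C" "c \<in> Hom C Q' D" "comp C c i = hzero C I D" using cc ii by auto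
    fix W h assume W: "W \<in> Obj C" and h: "h \<in> Hom C Q' W" and hi: "comp C h i = hzero C I W"
    have "comp C h f = comp C h (comp C i f1)" using f1 by simp
    also have "\<dots> = comp C (comp C h i) f1" using assoc[OF f1(1) ii(2) h] .
    also have "\<dots> = hzero C Q W" using hi comp_zero_l[OF f1(1) W] by simp
    finally show "\<exists>!u. u \<in> Hom C D W \<and> comp C u c = h" by (rule cokU[OF c W h])
  qed
  have iinj: "inj_on (TM i) (carrier (TO I))" using exact[OF ii(2) cc(2) i ci] by blast
  have imono: "is_mono C I Q' i" using ker_is_mono[OF i cc(2)] .
  have ztest: "d = hzero C I W" if d: "d \<in> Hom C I W" and dz: "comp C d f1 = hzero C Q W" for d W
  proof -
    have W: "W \<in> Obj C" using hom_obj d by blast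
    obtain M m where m: "is_kernel C I W d M m" using ab_ker[OF d] by blast
    have mm: "M \<in> Obj C" "m \<in> Hom C M I" "comp C d m = hzero C M W" using kerD[OF m] by auto
    obtain g0 where g0: "g0 \<in> Hom C Q M" "comp C m g0 = f1" using ex1_implies_ex[OF kerU[OF m Q(1) f1(1) dz]] by blast
    have im: "comp C i m \<in> Hom C M Q'" using comp_hom mm ii by blast
    have immono: "is_mono C M Q' (comp C i m)"
      unfolding is_mono_def
    proof (intro conjI ballI impI)
      show "comp C i m \<in> Hom C M Q'" by (fact im)
      fix W' a b assume W': "W' \<in> Obj C" and a: "a \<in> Hom C W' M" and b: "b \<in> Hom C W' M"
        and e: "comp C (comp C i m) a = comp C (comp C i m) b"
      have "comp C i (comp C m a) = comp C i (comp C m b)"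
        using e assoc[OF a mm(2) ii(2)] assoc[OF b mm(2) ii(2)] by simp
      then have "comp C m a = comp C m b" by (rule mono_cancel[OF imono comp_hom[OF a mm(2)] comp_hom[OF b mm(2)]])
      then show "a = b" by (rule ker_mono[OF m d a b])
    qed
    obtain Z h where h: "h \<in> Hom C Q' Z" "is_kernel C Q' Z h M (comp C i m)" using ab_mono[OF immono] by blast
    have Z: "Z \<in> Obj C" using hom_obj h by blast
    have hk: "comp C h (comp C i m) = hzero C M Z" using kerD[OF h(2)] by blast
    have "comp C h f = comp C h (comp C (comp C i m) g0)"
      using f1 g0 assoc[OF g0(1) mm(2) ii(2)] by simp
    also have "\<dots> = comp C (comp C h (comp C i m)) g0" using assoc[OF g0(1) im h(1)] .
    also have "\<dots> = hzero C Q Z" using hk comp_zero_l[OF g0(1) Z] by simp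
    finally have hz: "comp C h f = hzero C Q Z" .
    obtain h' where h': "h' \<in> Hom C D Z" "comp C h' c = h" using ex1_implies_ex[OF cokU[OF c Z h(1) hz]] by blast
    have "comp C h i = comp C h' (comp C c i)" using assoc[OF ii(2) cc(2) h'(1)] h' by simp
    also have "\<dots> = hzero C I Z" using ii(3) comp_zero_r[OF h'(1) ii(1)] by simp
    finally have hiz: "comp C h i = hzero C I Z" .
    obtain t where t: "t \<in> Hom C I M" "comp C (comp C i m) t = i"
      using ex1_implies_ex[OF kerU[OF h(2) ii(1) ii(2) hiz]] by blast
    have "comp C i (comp C m t) = comp C i (ident C I)"
      using t assoc[OF t(1) mm(2) ii(2)] id_r[OF ii(2)] by simp
    then have mt: "comp C m t = ident C I"
      by (rule mono_cancel[OF imono comp_hom[OF t(1) mm(2)] id_hom[OF ii(1)]])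
    have "d = comp C d (comp C m t)" using mt id_r[OF d] by simp
    also have "\<dots> = comp C (comp C d m) t" using assoc[OF t(1) mm(2) d] .
    also have "\<dots> = hzero C I W" using mm(3) comp_zero_l[OF t(1) W] by simp
    finally show ?thesis .
  qed
  have f1epi: "is_epi C Q I f1"
    unfolding is_epi_def
  proof (intro conjI ballI impI)
    show "f1 \<in> Hom C Q I" by (fact f1(1))
    fix W g h assume W: "W \<in> Obj C" and g: "g \<in> Hom C I W" and h: "h \<in> Hom C I W"
      and e: "comp C g f1 = comp C h f1"
    have d: "hsub g h \<in> Hom C I W" using hsub_hom g h by blast
    have "comp C (hsub g h) f1 = hzero C Q W"
    proof (rule faithful[OF comp_hom[OF f1(1) d] hzero_hom[OF Q(1) W]])
      fix v assume v: "v \<in> carrier (TO Q)"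
      interpret TW: module R "TO W" using Tmod W by blast
      have "TM (comp C (hsub g h) f1) v = TM g (TM f1 v) \<ominus>\<^bsub>TO W\<^esub> TM h (TM f1 v)"
        using T_comp[OF f1(1) d v] T_hsub[OF g h T_closed[OF f1(1) v]] by simp
      also have "\<dots> = TM (comp C g f1) v \<ominus>\<^bsub>TO W\<^esub> TM (comp C h f1) v"
        using T_comp[OF f1(1) g v] T_comp[OF f1(1) h v] by simp
      also have "\<dots> = \<zero>\<^bsub>TO W\<^esub>" using e T_closed[OF comp_hom[OF f1(1) h] v] by (simp add: a_minus_def TW.r_neg)
      finally show "TM (comp C (hsub g h) f1) v = TM (hzero C Q W) v" using T_hzero[OF Q(1) W v] by simp
    qed
    then have dz: "hsub g h = hzero C I W" by (rule ztest[OF d])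
    show "g = h"
    proof (rule faithful[OF g h])
      fix v assume v: "v \<in> carrier (TO I)"
      interpret TW: module R "TO W" using Tmod W by blast
      have "TM g v \<ominus>\<^bsub>TO W\<^esub> TM h v = \<zero>\<^bsub>TO W\<^esub>"
        using T_hsub[OF g h v] dz T_hzero[OF ii(1) W v] by simp
      then show "TM g v = TM h v" using T_closed[OF g v] T_closed[OF h v] TW.ag_eq by blast
    qed
  qed
  obtain S \<sigma> where s: "is_kernel C Q I f1 S \<sigma>" using ab_ker[OF f1(1)] by blast
  have ss: "S \<in> Obj C" "\<sigma> \<in> Hom C S Q" "comp C f1 \<sigma> = hzero C S I" using kerD[OF s] by auto
  obtain G g where g: "g \<in> Hom C G Q" "is_cokernel C G Q g I f1" using ab_epi[OF f1epi] by blast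
  have G: "G \<in> Obj C" using hom_obj g by blast
  have gz: "comp C f1 g = hzero C G I" using cokD[OF g(2)] by blast
  obtain v0 where v0: "v0 \<in> Hom C G S" "comp C \<sigma> v0 = g" using ex1_implies_ex[OF kerU[OF s G g(1) gz]] by blast
  have sc: "is_cokernel C S Q \<sigma> I f1"
    unfolding is_cokernel_def
  proof (intro conjI ballI impI)
    show "I \<in> Obj C" "f1 \<in> Hom C Q I" "comp C f1 \<sigma> = hzero C S I" using ii f1 ss by auto
    fix W h assume W: "W \<in> Obj C" and h: "h \<in> Hom C Q W" and hs: "comp C h \<sigma> = hzero C S W"
    have "comp C h g = comp C (comp C h \<sigma>) v0" using v0 assoc[OF v0(1) ss(2) h] by simp
    also have "\<dots> = hzero C G W" using hs comp_zero_l[OF v0(1) W] by simp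
    finally show "\<exists>!u. u \<in> Hom C I W \<and> comp C u f1 = h" by (rule cokU[OF g(2) W h])
  qed
  have ex2: "{y \<in> carrier (TO Q). TM f1 y = \<zero>\<^bsub>TO I\<^esub>} = TM \<sigma> ` carrier (TO S)"
    using exact[OF ss(2) f1(1) s sc] by blast
  show ?thesis
  proof (intro exI conjI ballI impI)
    show "\<sigma> \<in> Hom C S Q" by (fact ss(2))
    have "comp C f \<sigma> = comp C i (comp C f1 \<sigma>)" using f1 assoc[OF ss(2) f1(1) ii(2)] by simp
    also have "\<dots> = hzero C S Q'" using ss(3) comp_zero_r[OF ii(2) ss(1)] by simp
    finally show "comp C f \<sigma> = hzero C S Q'" .
    fix y assume y: "y \<in> carrier (TO Q)" and fy: "TM f y = \<zero>\<^bsub>TO Q'\<^esub>"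
    interpret TI: module R "TO I" using Tmod ii(1) by blast
    have eq: "TM i (TM f1 y) = TM i \<zero>\<^bsub>TO I\<^esub>"
      using fy T_comp[OF f1(1) ii(2) y] f1(2) T_zero_vec[OF ii(2)] by simp
    then have "TM f1 y = \<zero>\<^bsub>TO I\<^esub>"
      using iinj T_closed[OF f1(1) y] TI.zero_closed unfolding inj_on_def by blast
    then show "y \<in> TM \<sigma> ` carrier (TO S)" using ex2 y by blast
  qed
qed

end

context fctx
begin

lemma ab_zero: "\<exists>Z \<in> Obj C. \<forall>X \<in> Obj C. (\<exists>!u. u \<in> Hom C X Z) \<and> (\<exists>!u. u \<in> Hom C Z X)"
  by (rule ab[unfolded is_abelian_R_linear_category_def, THEN conjunct2, THEN conjunct1])

lemma ab_bi: "\<forall>X \<in> Obj C. \<forall>Y \<in> Obj C. \<exists>P i1 i2 p1 p2. P \<in> Obj C \<and>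
        i1 \<in> Hom C X P \<and> i2 \<in> Hom C Y P \<and> p1 \<in> Hom C P X \<and> p2 \<in> Hom C P Y \<and>
        comp C p1 i1 = ident C X \<and> comp C p2 i2 = ident C Y \<and>
        comp C p1 i2 = hzero C Y X \<and> comp C p2 i1 = hzero C X Y \<and>
        hadd C (comp C i1 p1) (comp C i2 p2) = ident C P"
  by (rule ab[unfolded is_abelian_R_linear_category_def, THEN conjunct2, THEN conjunct2, THEN conjunct1])

definition is_biprod where
  "is_biprod os Q \<iota> \<pi> \<longleftrightarrow> Q \<in> Obj C \<and>
     (\<forall>j<length os. \<iota> j \<in> Hom C (os!j) Q \<and> \<pi> j \<in> Hom C Q (os!j)) \<and>
     (\<forall>j<length os. \<forall>k<length os. \<forall>x\<in>carrier (TO (os!k)).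
        TM (\<pi> j) (TM (\<iota> k) x) = (if j = k then x else \<zero>\<^bsub>TO (os!j)\<^esub>)) \<and>
     (\<forall>y\<in>carrier (TO Q). y = finsum (TO Q) (\<lambda>j. TM (\<iota> j) (TM (\<pi> j) y)) {..<length os})"

lemma biprod_exists: "set os \<subseteq> Obj C \<Longrightarrow> \<exists>Q \<iota> \<pi>. is_biprod os Q \<iota> \<pi>"
proof (induction os rule: rev_induct)
  case Nil
  obtain Z where Z: "Z \<in> Obj C" "\<forall>X \<in> Obj C. (\<exists>!u. u \<in> Hom C X Z) \<and> (\<exists>!u. u \<in> Hom C Z X)"
    using ab_zero by blast
  have "ident C Z = hzero C Z Z"
    using Z id_hom[OF Z(1)] hzero_hom[OF Z(1) Z(1)] by blast
  then have z0: "\<forall>y\<in>carrier (TO Z). y = \<zero>\<^bsub>TO Z\<^esub>"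
    using T_id[OF Z(1)] T_hzero[OF Z(1) Z(1)] by metis
  interpret TZ: module R "TO Z" using Tmod Z(1) by blast
  have "is_biprod [] Z (\<lambda>_. undefined) (\<lambda>_. undefined)"
    unfolding is_biprod_def using Z(1) z0 by simp
  then show ?case by blast
next
  case (snoc X os)
  then obtain Q \<iota> \<pi> where B: "is_biprod os Q \<iota> \<pi>" by auto
  have X: "X \<in> Obj C" using snoc by auto
  have Q: "Q \<in> Obj C" using B is_biprod_def by blast
  obtain P i1 i2 p1 p2 where P: "P \<in> Obj C"
        "i1 \<in> Hom C Q P" "i2 \<in> Hom C X P" "p1 \<in> Hom C P Q" "p2 \<in> Hom C P X"
        "comp C p1 i1 = ident C Q" "comp C p2 i2 = ident C X"
        "comp C p1 i2 = hzero C X Q" "comp C p2 i1 = hzero C Q X"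
        "hadd C (comp C i1 p1) (comp C i2 p2) = ident C P"
    using ab_bi Q X by blast
  let ?n = "length os"
  define \<iota>' where "\<iota>' j = (if j < ?n then comp C i1 (\<iota> j) else i2)" for j
  define \<pi>' where "\<pi>' j = (if j < ?n then comp C (\<pi> j) p1 else p2)" for j
  have Bh: "\<And>j. j < ?n \<Longrightarrow> \<iota> j \<in> Hom C (os!j) Q \<and> \<pi> j \<in> Hom C Q (os!j)"
    using B unfolding is_biprod_def by blast
  have Bd: "\<And>j k x. j < ?n \<Longrightarrow> k < ?n \<Longrightarrow> x \<in> carrier (TO (os!k)) \<Longrightarrow>
        TM (\<pi> j) (TM (\<iota> k) x) = (if j = k then x else \<zero>\<^bsub>TO (os!j)\<^esub>)"
    using B unfolding is_biprod_def by blast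
  have Bs: "\<And>y. y \<in> carrier (TO Q) \<Longrightarrow> y = finsum (TO Q) (\<lambda>j. TM (\<iota> j) (TM (\<pi> j) y)) {..<?n}"
    using B unfolding is_biprod_def by blast
  have nth: "\<And>j. j < ?n \<Longrightarrow> (os @ [X]) ! j = os ! j" "(os @ [X]) ! ?n = X"
    by (simp_all add: nth_append)
  have T11: "\<And>x. x \<in> carrier (TO Q) \<Longrightarrow> TM p1 (TM i1 x) = x"
    using T_comp[OF P(2) P(4)] P(6) T_id[OF Q] by metis
  have T22: "\<And>x. x \<in> carrier (TO X) \<Longrightarrow> TM p2 (TM i2 x) = x"
    using T_comp[OF P(3) P(5)] P(7) T_id[OF X] by metis
  have T12: "\<And>x. x \<in> carrier (TO X) \<Longrightarrow> TM p1 (TM i2 x) = \<zero>\<^bsub>TO Q\<^esub>"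
    using T_comp[OF P(3) P(4)] P(8) T_hzero[OF X Q] by metis
  have T21: "\<And>x. x \<in> carrier (TO Q) \<Longrightarrow> TM p2 (TM i1 x) = \<zero>\<^bsub>TO X\<^esub>"
    using T_comp[OF P(2) P(5)] P(9) T_hzero[OF Q X] by metis
  have c1: "comp C i1 p1 \<in> Hom C P P" "comp C i2 p2 \<in> Hom C P P"
    using comp_hom P by blast+
  have Tsplit: "\<And>y. y \<in> carrier (TO P) \<Longrightarrow> y = TM i1 (TM p1 y) \<oplus>\<^bsub>TO P\<^esub> TM i2 (TM p2 y)"
  proof -
    fix y assume y: "y \<in> carrier (TO P)"
    have "y = TM (ident C P) y" using T_id[OF P(1) y] by simp
    also have "\<dots> = TM (comp C i1 p1) y \<oplus>\<^bsub>TO P\<^esub> TM (comp C i2 p2) y"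
      using P(10) T_hadd[OF c1 y] by simp
    also have "\<dots> = TM i1 (TM p1 y) \<oplus>\<^bsub>TO P\<^esub> TM i2 (TM p2 y)"
      using T_comp[OF P(4) P(2) y] T_comp[OF P(5) P(3) y] by simp
    finally show "y = TM i1 (TM p1 y) \<oplus>\<^bsub>TO P\<^esub> TM i2 (TM p2 y)" .
  qed
  interpret TP: module R "TO P" using Tmod P(1) by blast
  interpret TQ: module R "TO Q" using Tmod Q by blast
  have "is_biprod (os @ [X]) P \<iota>' \<pi>'"
    unfolding is_biprod_def
  proof (intro conjI)
    show "P \<in> Obj C" by (fact P(1))
    show "\<forall>j<length (os @ [X]). \<iota>' j \<in> Hom C ((os @ [X]) ! j) P \<and> \<pi>' j \<in> Hom C P ((os @ [X]) ! j)"
    proof (intro allI impI)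
    fix j assume j: "j < length (os @ [X])"
    then have "j < ?n \<or> j = ?n" by auto
    then show "\<iota>' j \<in> Hom C ((os @ [X]) ! j) P \<and> \<pi>' j \<in> Hom C P ((os @ [X]) ! j)"
    proof
      assume j: "j < ?n"
      show ?thesis unfolding \<iota>'_def \<pi>'_def using j nth(1)[OF j]
          comp_hom[OF conjunct1[OF Bh[OF j]] P(2)] comp_hom[OF P(4) conjunct2[OF Bh[OF j]]] by simp
    next
      assume j: "j = ?n"
      show ?thesis unfolding \<iota>'_def \<pi>'_def using j nth(2) P by simp
    qed
    qed
  next
    show "\<forall>j<length (os @ [X]). \<forall>k<length (os @ [X]). \<forall>x\<in>carrier (TO ((os @ [X]) ! k)).
        TM (\<pi>' j) (TM (\<iota>' k) x) = (if j = k then x else \<zero>\<^bsub>TO ((os @ [X]) ! j)\<^esub>)"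
    proof (intro allI impI ballI)
    fix j k x assume j: "j < length (os @ [X])" and k: "k < length (os @ [X])"
      and x: "x \<in> carrier (TO ((os @ [X]) ! k))"
    have jj: "j < ?n \<or> j = ?n" and kk: "k < ?n \<or> k = ?n" using j k by auto
    show "TM (\<pi>' j) (TM (\<iota>' k) x) = (if j = k then x else \<zero>\<^bsub>TO ((os @ [X]) ! j)\<^esub>)"
    proof (cases "k < ?n")
      case True
      have xk: "x \<in> carrier (TO (os ! k))" using x nth True by simp
      have ik: "TM (\<iota>' k) x = TM i1 (TM (\<iota> k) x)"
        unfolding \<iota>'_def using True T_comp[OF conjunct1[OF Bh[OF True]] P(2) xk] by simp
      have ikc: "TM (\<iota> k) x \<in> carrier (TO Q)" using T_closed Bh True xk by blast
      show ?thesis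
      proof (cases "j < ?n")
        case True
        have "TM (\<pi>' j) (TM (\<iota>' k) x) = TM (\<pi> j) (TM p1 (TM i1 (TM (\<iota> k) x)))"
          unfolding \<pi>'_def ik using True T_comp[OF P(4) conjunct2[OF Bh[OF True]]] T_closed[OF P(2) ikc] by simp
        also have "\<dots> = TM (\<pi> j) (TM (\<iota> k) x)" using T11 ikc by simp
        finally show ?thesis using Bd[OF True \<open>k < ?n\<close> xk] nth True by simp
      next
        case False
        then have jn: "j = ?n" using jj by auto
        have "TM (\<pi>' j) (TM (\<iota>' k) x) = TM p2 (TM i1 (TM (\<iota> k) x))"
          unfolding \<pi>'_def ik using jn by simp
        then show ?thesis using T21 ikc jn \<open>k < ?n\<close> nth by simp
      qed
    next
      case False
      then have kn: "k = ?n" using kk by auto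
      have xk: "x \<in> carrier (TO X)" using x nth kn by simp
      have ik: "TM (\<iota>' k) x = TM i2 x" unfolding \<iota>'_def using kn by simp
      show ?thesis
      proof (cases "j < ?n")
        case True
        have "TM (\<pi>' j) (TM (\<iota>' k) x) = TM (\<pi> j) (TM p1 (TM i2 x))"
          unfolding \<pi>'_def ik using True T_comp[OF P(4) conjunct2[OF Bh[OF True]]] T_closed[OF P(3) xk] by simp
        also have "\<dots> = \<zero>\<^bsub>TO (os ! j)\<^esub>" using T12[OF xk] T_zero_vec conjunct2[OF Bh[OF True]] by simp
        finally show ?thesis using True kn nth by simp
      next
        case False
        then have jn: "j = ?n" using jj by auto
        show ?thesis unfolding \<pi>'_def ik using jn kn T22[OF xk] by simp
      qed
    qed
    qed
  next
    show "\<forall>y\<in>carrier (TO P). y = finsum (TO P) (\<lambda>j. TM (\<iota>' j) (TM (\<pi>' j) y)) {..<length (os @ [X])}"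
    proof
    fix y assume y: "y \<in> carrier (TO P)"
    have p1y: "TM p1 y \<in> carrier (TO Q)" using T_closed[OF P(4) y] .
    have p2y: "TM p2 y \<in> carrier (TO X)" using T_closed[OF P(5) y] .
    have fc: "(\<lambda>j. TM (\<iota> j) (TM (\<pi> j) (TM p1 y))) \<in> {..<?n} \<rightarrow> carrier (TO Q)"
    proof
      fix j assume "j \<in> {..<?n}"
      then have j: "j < ?n" by simp
      show "TM (\<iota> j) (TM (\<pi> j) (TM p1 y)) \<in> carrier (TO Q)"
        using T_closed[OF conjunct1[OF Bh[OF j]] T_closed[OF conjunct2[OF Bh[OF j]] p1y]] .
    qed
    have fc': "(\<lambda>j. TM (\<iota>' j) (TM (\<pi>' j) y)) \<in> {..<Suc ?n} \<rightarrow> carrier (TO P)"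
    proof
      fix j assume "j \<in> {..<Suc ?n}"
      then have "j < ?n \<or> j = ?n" by auto
      then show "TM (\<iota>' j) (TM (\<pi>' j) y) \<in> carrier (TO P)"
      proof
        assume j: "j < ?n"
        have a: "\<iota>' j \<in> Hom C (os ! j) P" "\<pi>' j \<in> Hom C P (os ! j)" unfolding \<iota>'_def \<pi>'_def using j
          comp_hom[OF conjunct1[OF Bh[OF j]] P(2)] comp_hom[OF P(4) conjunct2[OF Bh[OF j]]] by simp_all
        show ?thesis using T_closed[OF a(1) T_closed[OF a(2) y]] .
      next
        assume j: "j = ?n"
        show ?thesis unfolding \<iota>'_def \<pi>'_def using j T_closed[OF P(3) T_closed[OF P(5) y]] by simp
      qed
    qed
    have "TM i1 (TM p1 y) = TM i1 (finsum (TO Q) (\<lambda>j. TM (\<iota> j) (TM (\<pi> j) (TM p1 y))) {..<?n})"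
      using Bs[OF p1y] by simp
    also have "\<dots> = finsum (TO P) (\<lambda>j. TM i1 (TM (\<iota> j) (TM (\<pi> j) (TM p1 y)))) {..<?n}"
      by (rule lin_map_finsum[OF Tmod[OF Q] Tmod[OF P(1)] Tlin[OF P(2)] _ fc]) simp
    also have "\<dots> = finsum (TO P) (\<lambda>j. TM (\<iota>' j) (TM (\<pi>' j) y)) {..<?n}"
    proof (rule TP.finsum_cong')
      show "{..<?n} = {..<?n}" by simp
      show "(\<lambda>j. TM (\<iota>' j) (TM (\<pi>' j) y)) \<in> {..<?n} \<rightarrow> carrier (TO P)" using fc' by auto
      fix j assume "j \<in> {..<?n}"
      then have j: "j < ?n" by simp
      have pj: "\<pi> j \<in> Hom C Q (os!j)" and ij: "\<iota> j \<in> Hom C (os!j) Q" using Bh[OF j] by auto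
      have "TM (\<pi>' j) y = TM (\<pi> j) (TM p1 y)" unfolding \<pi>'_def using j T_comp[OF P(4) pj y] by simp
      moreover have "TM (\<iota>' j) z = TM i1 (TM (\<iota> j) z)" if "z \<in> carrier (TO (os!j))" for z
        unfolding \<iota>'_def using j T_comp[OF ij P(2) that] by simp
      ultimately show "TM i1 (TM (\<iota> j) (TM (\<pi> j) (TM p1 y))) = TM (\<iota>' j) (TM (\<pi>' j) y)"
        using T_closed[OF pj p1y] by simp
    qed
    finally have e1: "TM i1 (TM p1 y) = finsum (TO P) (\<lambda>j. TM (\<iota>' j) (TM (\<pi>' j) y)) {..<?n}" .
    have e2: "TM i2 (TM p2 y) = TM (\<iota>' ?n) (TM (\<pi>' ?n) y)" unfolding \<iota>'_def \<pi>'_def by simp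
    have "finsum (TO P) (\<lambda>j. TM (\<iota>' j) (TM (\<pi>' j) y)) {..<length (os @ [X])}
        = TM (\<iota>' ?n) (TM (\<pi>' ?n) y) \<oplus>\<^bsub>TO P\<^esub> finsum (TO P) (\<lambda>j. TM (\<iota>' j) (TM (\<pi>' j) y)) {..<?n}"
      using fc' by (simp add: lessThan_Suc Pi_def)
    also have "\<dots> = TM i1 (TM p1 y) \<oplus>\<^bsub>TO P\<^esub> TM i2 (TM p2 y)"
      using e1 e2 T_closed[OF P(2) p1y] T_closed[OF P(3) p2y] TP.a_comm by simp
    also have "\<dots> = y" using Tsplit[OF y] by simp
    finally show "y = finsum (TO P) (\<lambda>j. TM (\<iota>' j) (TM (\<pi>' j) y)) {..<length (os @ [X])}" by simp
    qed
  qed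
  then show ?case by blast
qed

end

lemma lin_map_closed: "lin_map R M N h \<Longrightarrow> x \<in> carrier M \<Longrightarrow> h x \<in> carrier N"
  unfolding lin_map_def by (elim conjE) (erule bspec)
lemma lin_map_add: "lin_map R M N h \<Longrightarrow> x \<in> carrier M \<Longrightarrow> y \<in> carrier M \<Longrightarrow> h (x \<oplus>\<^bsub>M\<^esub> y) = h x \<oplus>\<^bsub>N\<^esub> h y"
  unfolding lin_map_def by (elim conjE) simp
lemma lin_map_smult: "lin_map R M N h \<Longrightarrow> r \<in> carrier R \<Longrightarrow> x \<in> carrier M \<Longrightarrow> h (r \<odot>\<^bsub>M\<^esub> x) = r \<odot>\<^bsub>N\<^esub> h x"
  unfolding lin_map_def by (elim conjE) simp
lemma submD: "subm R M P \<Longrightarrow> P \<subseteq> carrier M"  "subm R M P \<Longrightarrow> \<zero>\<^bsub>M\<^esub> \<in> P"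
  "subm R M P \<Longrightarrow> a \<in> P \<Longrightarrow> b \<in> P \<Longrightarrow> a \<oplus>\<^bsub>M\<^esub> b \<in> P"
  "subm R M P \<Longrightarrow> r \<in> carrier R \<Longrightarrow> a \<in> P \<Longrightarrow> r \<odot>\<^bsub>M\<^esub> a \<in> P"
  unfolding subm_def by (elim conjE; simp)+


definition lmap :: "('r,'x) ring_scheme \<Rightarrow> ('r,'a,'c) module_scheme \<Rightarrow> ('r,'b,'d) module_scheme \<Rightarrow> ('a \<Rightarrow> 'b) \<Rightarrow> bool" where
  "lmap R M N h \<longleftrightarrow> (\<forall>x \<in> carrier M. h x \<in> carrier N) \<and>
     (\<forall>x \<in> carrier M. \<forall>y \<in> carrier M. h (x \<oplus>\<^bsub>M\<^esub> y) = h x \<oplus>\<^bsub>N\<^esub> h y) \<and>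
     (\<forall>r \<in> carrier R. \<forall>x \<in> carrier M. h (r \<odot>\<^bsub>M\<^esub> x) = r \<odot>\<^bsub>N\<^esub> h x)"

lemma lin_map_lmap: "lin_map R M N h \<Longrightarrow> lmap R M N h"
  unfolding lin_map_def lmap_def by assumption

lemma lmap_closed: "lmap R M N h \<Longrightarrow> x \<in> carrier M \<Longrightarrow> h x \<in> carrier N"
  unfolding lmap_def by (elim conjE) (erule bspec)
lemma lmap_add: "lmap R M N h \<Longrightarrow> x \<in> carrier M \<Longrightarrow> y \<in> carrier M \<Longrightarrow> h (x \<oplus>\<^bsub>M\<^esub> y) = h x \<oplus>\<^bsub>N\<^esub> h y"
  unfolding lmap_def by (elim conjE) simp
lemma lmap_smult: "lmap R M N h \<Longrightarrow> r \<in> carrier R \<Longrightarrow> x \<in> carrier M \<Longrightarrow> h (r \<odot>\<^bsub>M\<^esub> x) = r \<odot>\<^bsub>N\<^esub> h x"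
  unfolding lmap_def by (elim conjE) simp

lemma lmap_zero:
  assumes "module R M" "module R N" "lmap R M N h"
  shows "h \<zero>\<^bsub>M\<^esub> = \<zero>\<^bsub>N\<^esub>"
proof -
  interpret M: module R M by fact
  interpret N: module R N by fact
  have "h (\<zero>\<^bsub>R\<^esub> \<odot>\<^bsub>M\<^esub> \<zero>\<^bsub>M\<^esub>) = \<zero>\<^bsub>R\<^esub> \<odot>\<^bsub>N\<^esub> h \<zero>\<^bsub>M\<^esub>"
    by (rule lmap_smult[OF assms(3) M.R.zero_closed M.zero_closed])
  moreover have "h \<zero>\<^bsub>M\<^esub> \<in> carrier N" using lmap_closed[OF assms(3)] by simp
  ultimately show ?thesis by simp
qed

lemma span_image:
  assumes "module R M" "module R N" "lmap R M N f" "S \<subseteq> carrier M"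
  shows "mspan R N (f ` S) \<subseteq> f ` mspan R M S"
proof
  interpret M: module R M by fact
  interpret N: module R N by fact
  have fl: "\<forall>x \<in> carrier M. \<forall>y \<in> carrier M. f (x \<oplus>\<^bsub>M\<^esub> y) = f x \<oplus>\<^bsub>N\<^esub> f y"
    "\<forall>r \<in> carrier R. \<forall>x \<in> carrier M. f (r \<odot>\<^bsub>M\<^esub> x) = r \<odot>\<^bsub>N\<^esub> f x"
    using lmap_closed[OF assms(3)] lmap_add[OF assms(3)] lmap_smult[OF assms(3)] by auto
  have sc: "mspan R M S \<subseteq> carrier M" using M.span_carrier[OF assms(4)] .
  fix z assume "z \<in> mspan R N (f ` S)"
  then show "z \<in> f ` mspan R M S"
  proof (induction rule: mspan.induct)
    case span_zero
    have "\<zero>\<^bsub>N\<^esub> = f \<zero>\<^bsub>M\<^esub>" using lmap_zero[OF assms(1-3)] by simp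
    moreover have "\<zero>\<^bsub>M\<^esub> \<in> mspan R M S" by (rule mspan.span_zero)
    ultimately show ?case by (rule image_eqI)
  next
    case (span_gen z)
    then obtain s where s: "s \<in> S" "z = f s" by blast
    have "s \<in> mspan R M S" using s(1) by (rule mspan.span_gen)
    with s(2) show ?case by (rule image_eqI)
  next
    case (span_add a b)
    then obtain a' b' where ab: "a' \<in> mspan R M S" "a = f a'" "b' \<in> mspan R M S" "b = f b'" by blast
    have "a' \<in> carrier M" "b' \<in> carrier M" using ab(1,3) sc by (blast, blast)
    then have "a \<oplus>\<^bsub>N\<^esub> b = f (a' \<oplus>\<^bsub>M\<^esub> b')" using fl(1) ab by simp
    moreover have "a' \<oplus>\<^bsub>M\<^esub> b' \<in> mspan R M S" using ab by (simp add: mspan.span_add)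
    ultimately show ?case by (rule image_eqI)
  next
    case (span_smult r a)
    then obtain a' where ab: "a' \<in> mspan R M S" "a = f a'" by blast
    have "a' \<in> carrier M" using ab(1) sc by blast
    then have "r \<odot>\<^bsub>N\<^esub> a = f (r \<odot>\<^bsub>M\<^esub> a')" using fl(2) ab span_smult(1) by simp
    moreover have "r \<odot>\<^bsub>M\<^esub> a' \<in> mspan R M S" using ab span_smult(1) by (simp add: mspan.span_smult)
    ultimately show ?case by (rule image_eqI)
  qed
qed


lemma lin_map_image_subm':
  assumes "module R M" "module R N" "lmap R M N h" "subm R M P"
  shows "subm R N (h ` P)"
proof -
  interpret M: module R M by fact
  interpret N: module R N by fact
  have fl: "\<forall>x \<in> carrier M. h x \<in> carrier N" "\<forall>x \<in> carrier M. \<forall>y \<in> carrier M. h (x \<oplus>\<^bsub>M\<^esub> y) = h x \<oplus>\<^bsub>N\<^esub> h y"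
    "\<forall>r \<in> carrier R. \<forall>x \<in> carrier M. h (r \<odot>\<^bsub>M\<^esub> x) = r \<odot>\<^bsub>N\<^esub> h x"
    using lmap_closed[OF assms(3)] lmap_add[OF assms(3)] lmap_smult[OF assms(3)] by auto
  have P: "P \<subseteq> carrier M" "\<zero>\<^bsub>M\<^esub> \<in> P" "\<forall>a\<in>P. \<forall>b\<in>P. a \<oplus>\<^bsub>M\<^esub> b \<in> P" "\<forall>r\<in>carrier R. \<forall>a\<in>P. r \<odot>\<^bsub>M\<^esub> a \<in> P"
    using submD[OF assms(4)] by auto
  show ?thesis unfolding subm_def
  proof (intro conjI ballI)
    show "h ` P \<subseteq> carrier N" using fl P by auto
    have "\<zero>\<^bsub>N\<^esub> = h \<zero>\<^bsub>M\<^esub>" using lmap_zero[OF assms(1-3)] by simp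
    then show "\<zero>\<^bsub>N\<^esub> \<in> h ` P" using P(2) by (rule image_eqI)
  next
    fix a b assume "a \<in> h ` P" "b \<in> h ` P"
    then obtain a' b' where "a' \<in> P" "b' \<in> P" "a = h a'" "b = h b'" by blast
    moreover have "a' \<in> carrier M" "b' \<in> carrier M" using P(1) \<open>a' \<in> P\<close> \<open>b' \<in> P\<close> by auto
    ultimately have "a \<oplus>\<^bsub>N\<^esub> b = h (a' \<oplus>\<^bsub>M\<^esub> b')" using fl(2) by simp
    moreover have "a' \<oplus>\<^bsub>M\<^esub> b' \<in> P" using P(3) \<open>a' \<in> P\<close> \<open>b' \<in> P\<close> by blast
    ultimately show "a \<oplus>\<^bsub>N\<^esub> b \<in> h ` P" by (rule image_eqI)
  next
    fix r a assume "r \<in> carrier R" "a \<in> h ` P"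
    then obtain a' where "a' \<in> P" "a = h a'" "r \<in> carrier R" by blast
    moreover have "a' \<in> carrier M" using P(1) \<open>a' \<in> P\<close> by auto
    ultimately have "r \<odot>\<^bsub>N\<^esub> a = h (r \<odot>\<^bsub>M\<^esub> a')" using fl(3) by simp
    moreover have "r \<odot>\<^bsub>M\<^esub> a' \<in> P" using P(4) \<open>a' \<in> P\<close> \<open>r \<in> carrier R\<close> by blast
    ultimately show "r \<odot>\<^bsub>N\<^esub> a \<in> h ` P" by (rule image_eqI)
  qed
qed


context fctx
begin

lemma biprodD:
  assumes "is_biprod os Q \<iota> \<pi>"
  shows "Q \<in> Obj C"
    "\<And>j. j < length os \<Longrightarrow> \<iota> j \<in> Hom C (os!j) Q"
    "\<And>j. j < length os \<Longrightarrow> \<pi> j \<in> Hom C Q (os!j)"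
    "\<And>j k x. j < length os \<Longrightarrow> k < length os \<Longrightarrow> x \<in> carrier (TO (os!k)) \<Longrightarrow>
        TM (\<pi> j) (TM (\<iota> k) x) = (if j = k then x else \<zero>\<^bsub>TO (os!j)\<^esub>)"
    "\<And>y. y \<in> carrier (TO Q) \<Longrightarrow> y = finsum (TO Q) (\<lambda>j. TM (\<iota> j) (TM (\<pi> j) y)) {..<length os}"
  using assms unfolding is_biprod_def by (elim conjE; simp)+

lemma biprod_ext:
  assumes B: "is_biprod os Q \<iota> \<pi>" and y: "y \<in> carrier (TO Q)" "y' \<in> carrier (TO Q)"
    and e: "\<And>j. j < length os \<Longrightarrow> TM (\<pi> j) y = TM (\<pi> j) y'"
  shows "y = y'"
proof -
  have Q: "Q \<in> Obj C" using biprodD(1)[OF B] .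
  interpret TQ: module R "TO Q" using Tmod[OF Q] .
  have "y = finsum (TO Q) (\<lambda>j. TM (\<iota> j) (TM (\<pi> j) y)) {..<length os}" using biprodD(5)[OF B y(1)] .
  also have "\<dots> = finsum (TO Q) (\<lambda>j. TM (\<iota> j) (TM (\<pi> j) y')) {..<length os}"
  proof (rule TQ.finsum_cong')
    show "(\<lambda>j. TM (\<iota> j) (TM (\<pi> j) y')) \<in> {..<length os} \<rightarrow> carrier (TO Q)"
    proof
      fix j assume "j \<in> {..<length os}" then have j: "j < length os" by simp
      show "TM (\<iota> j) (TM (\<pi> j) y') \<in> carrier (TO Q)"
        using T_closed[OF biprodD(2)[OF B j] T_closed[OF biprodD(3)[OF B j] y(2)]] .
    qed
  qed (use e in auto)
  also have "\<dots> = y'" using biprodD(5)[OF B y(2)] by simp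
  finally show ?thesis .
qed

lemma biprod_surj:
  assumes B: "is_biprod os Q \<iota> \<pi>" and x: "\<And>j. j < length os \<Longrightarrow> x j \<in> carrier (TO (os!j))"
  shows "finsum (TO Q) (\<lambda>k. TM (\<iota> k) (x k)) {..<length os} \<in> carrier (TO Q)"
    "\<And>j. j < length os \<Longrightarrow> TM (\<pi> j) (finsum (TO Q) (\<lambda>k. TM (\<iota> k) (x k)) {..<length os}) = x j"
proof -
  have Q: "Q \<in> Obj C" using biprodD(1)[OF B] .
  interpret TQ: module R "TO Q" using Tmod[OF Q] .
  have fc: "(\<lambda>k. TM (\<iota> k) (x k)) \<in> {..<length os} \<rightarrow> carrier (TO Q)"
  proof
    fix k assume "k \<in> {..<length os}" then have k: "k < length os" by simp
    show "TM (\<iota> k) (x k) \<in> carrier (TO Q)" using T_closed[OF biprodD(2)[OF B k] x[OF k]] .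
  qed
  show "finsum (TO Q) (\<lambda>k. TM (\<iota> k) (x k)) {..<length os} \<in> carrier (TO Q)"
    using TQ.finsum_closed[OF fc] .
  fix j assume j: "j < length os"
  have pj: "\<pi> j \<in> Hom C Q (os!j)" using biprodD(3)[OF B j] .
  have Oj: "os!j \<in> Obj C" using hom_obj pj by blast
  interpret TJ: module R "TO (os!j)" using Tmod[OF Oj] .
  have "TM (\<pi> j) (finsum (TO Q) (\<lambda>k. TM (\<iota> k) (x k)) {..<length os})
      = finsum (TO (os!j)) (\<lambda>k. TM (\<pi> j) (TM (\<iota> k) (x k))) {..<length os}"
    by (rule lin_map_finsum[OF Tmod[OF Q] Tmod[OF Oj] Tlin[OF pj] _ fc]) simp
  also have "\<dots> = finsum (TO (os!j)) (\<lambda>k. if j = k then x j else \<zero>\<^bsub>TO (os!j)\<^esub>) {..<length os}"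
  proof (rule TJ.finsum_cong')
    show "(\<lambda>k. if j = k then x j else \<zero>\<^bsub>TO (os!j)\<^esub>) \<in> {..<length os} \<rightarrow> carrier (TO (os!j))"
      using x[OF j] by auto
    fix k assume "k \<in> {..<length os}" then have k: "k < length os" by simp
    show "TM (\<pi> j) (TM (\<iota> k) (x k)) = (if j = k then x j else \<zero>\<^bsub>TO (os!j)\<^esub>)"
      using biprodD(4)[OF B j k x[OF k]] by simp
  qed simp
  also have "\<dots> = x j"
    using TJ.finsum_singleton[of j "{..<length os}" "\<lambda>_. x j"] j x[OF j] by auto
  finally show "TM (\<pi> j) (finsum (TO Q) (\<lambda>k. TM (\<iota> k) (x k)) {..<length os}) = x j" .
qed

primrec msum where
  "msum X Z h 0 = hzero C X Z"
| "msum X Z h (Suc n) = hadd C (msum X Z h n) (h n)"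

lemma msum:
  assumes X: "X \<in> Obj C" and Z: "Z \<in> Obj C" and h: "\<And>j. j < n \<Longrightarrow> h j \<in> Hom C X Z"
  shows "msum X Z h n \<in> Hom C X Z \<and>
    (\<forall>v\<in>carrier (TO X). TM (msum X Z h n) v = finsum (TO Z) (\<lambda>j. TM (h j) v) {..<n})"
  using h
proof (induction n)
  case 0
  interpret TZ: module R "TO Z" using Tmod[OF Z] .
  show ?case using hzero_hom[OF X Z] T_hzero[OF X Z] by simp
next
  case (Suc n)
  interpret TZ: module R "TO Z" using Tmod[OF Z] .
  have IH: "msum X Z h n \<in> Hom C X Z"
     "\<forall>v\<in>carrier (TO X). TM (msum X Z h n) v = finsum (TO Z) (\<lambda>j. TM (h j) v) {..<n}"
    using Suc by auto
  have hn: "h n \<in> Hom C X Z" using Suc.prems by simp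
  show ?case
  proof (intro conjI ballI)
    show "msum X Z h (Suc n) \<in> Hom C X Z" using hadd_hom[OF IH(1) hn] by simp
    fix v assume v: "v \<in> carrier (TO X)"
    have fc: "(\<lambda>j. TM (h j) v) \<in> {..<n} \<rightarrow> carrier (TO Z)"
    proof
      fix j assume "j \<in> {..<n}" then have "j < Suc n" by simp
      then show "TM (h j) v \<in> carrier (TO Z)" using T_closed[OF Suc.prems v] by blast
    qed
    have "TM (msum X Z h (Suc n)) v = finsum (TO Z) (\<lambda>j. TM (h j) v) {..<n} \<oplus>\<^bsub>TO Z\<^esub> TM (h n) v"
      using T_hadd[OF IH(1) hn v] IH(2) v by simp
    also have "\<dots> = finsum (TO Z) (\<lambda>j. TM (h j) v) {..<Suc n}"
      using fc T_closed[OF hn v] by (simp add: lessThan_Suc TZ.a_comm TZ.finsum_closed)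
    finally show "TM (msum X Z h (Suc n)) v = finsum (TO Z) (\<lambda>j. TM (h j) v) {..<Suc n}" .
  qed
qed

lemma iter_kernel:
  assumes Q: "Q \<in> Obj C" and W: "W \<in> Obj C"
  shows "set hs \<subseteq> Hom C Q W \<Longrightarrow> \<exists>P \<sigma>. \<sigma> \<in> Hom C P Q \<and>
    (\<forall>s\<in>carrier (TO P). \<forall>h\<in>set hs. TM h (TM \<sigma> s) = \<zero>\<^bsub>TO W\<^esub>) \<and>
    (\<forall>y\<in>carrier (TO Q). (\<forall>h\<in>set hs. TM h y = \<zero>\<^bsub>TO W\<^esub>) \<longrightarrow> y \<in> TM \<sigma> ` carrier (TO P))"
proof (induction hs)
  case Nil
  have "\<forall>y\<in>carrier (TO Q). y \<in> TM (ident C Q) ` carrier (TO Q)"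
  proof
    fix y assume y: "y \<in> carrier (TO Q)"
    have "y = TM (ident C Q) y" using T_id[OF Q y] by simp
    with y show "y \<in> TM (ident C Q) ` carrier (TO Q)" by (intro image_eqI)
  qed
  then show ?case using id_hom[OF Q] by auto
next
  case (Cons h hs)
  then obtain P \<sigma> where P: "\<sigma> \<in> Hom C P Q"
    "\<forall>s\<in>carrier (TO P). \<forall>h\<in>set hs. TM h (TM \<sigma> s) = \<zero>\<^bsub>TO W\<^esub>"
    "\<forall>y\<in>carrier (TO Q). (\<forall>h\<in>set hs. TM h y = \<zero>\<^bsub>TO W\<^esub>) \<longrightarrow> y \<in> TM \<sigma> ` carrier (TO P)"
    by auto
  have h: "h \<in> Hom C Q W" using Cons.prems by simp
  have hs: "comp C h \<sigma> \<in> Hom C P W" using comp_hom[OF P(1) h] .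
  obtain S \<tau> where S: "\<tau> \<in> Hom C S P" "comp C (comp C h \<sigma>) \<tau> = hzero C S W"
    "\<forall>y\<in>carrier (TO P). TM (comp C h \<sigma>) y = \<zero>\<^bsub>TO W\<^esub> \<longrightarrow> y \<in> TM \<tau> ` carrier (TO S)"
    using kernel_T[OF hs] by blast
  have So: "S \<in> Obj C" using hom_obj S(1) by blast
  show ?case
  proof (intro exI conjI ballI impI)
    show "comp C \<sigma> \<tau> \<in> Hom C S Q" using comp_hom[OF S(1) P(1)] .
    fix s h' assume s: "s \<in> carrier (TO S)" and h': "h' \<in> set (h # hs)"
    have ts: "TM \<tau> s \<in> carrier (TO P)" using T_closed[OF S(1) s] .
    have eq: "TM (comp C \<sigma> \<tau>) s = TM \<sigma> (TM \<tau> s)" using T_comp[OF S(1) P(1) s] .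
    show "TM h' (TM (comp C \<sigma> \<tau>) s) = \<zero>\<^bsub>TO W\<^esub>"
    proof (cases "h' = h")
      case True
      have "TM h (TM \<sigma> (TM \<tau> s)) = TM (comp C (comp C h \<sigma>) \<tau>) s"
        using T_comp[OF S(1) hs s] T_comp[OF P(1) h ts] by simp
      also have "\<dots> = \<zero>\<^bsub>TO W\<^esub>" using S(2) T_hzero[OF So W s] by simp
      finally show ?thesis using True eq by simp
    next
      case False
      then have "h' \<in> set hs" using h' by simp
      then show ?thesis using P(2) ts eq by simp
    qed
  next
    fix y assume y: "y \<in> carrier (TO Q)" and z: "\<forall>h'\<in>set (h # hs). TM h' y = \<zero>\<^bsub>TO W\<^esub>"
    then have "y \<in> TM \<sigma> ` carrier (TO P)" using P(3) by simp
    then obtain p where p: "p \<in> carrier (TO P)" "y = TM \<sigma> p" by blast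
    have "TM (comp C h \<sigma>) p = \<zero>\<^bsub>TO W\<^esub>" using T_comp[OF P(1) h p(1)] p(2) z by simp
    then have "p \<in> TM \<tau> ` carrier (TO S)" using S(3) p(1) by simp
    then obtain s where s: "s \<in> carrier (TO S)" "p = TM \<tau> s" by blast
    have "y = TM (comp C \<sigma> \<tau>) s" using T_comp[OF S(1) P(1) s(1)] s(2) p(2) by simp
    with s(1) show "y \<in> TM (comp C \<sigma> \<tau>) ` carrier (TO S)" by (intro image_eqI)
  qed
qed

end

context fctx
begin

lemma obj_span:
  assumes A: "A \<in> Obj C"
  shows "\<exists>us. set us \<subseteq> carrier (TO A) \<and> carrier (TO A) \<subseteq> mspan R (TO A) (set us)"
proof -
  obtain G where G: "finite G" "G \<subseteq> carrier (TO A)" "carrier (TO A) \<subseteq> mspan R (TO A) G"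
    using fg_span[OF Tmod[OF A] Tfg[OF A]] by blast
  obtain us where "set us = G" using finite_list[OF G(1)] by blast
  then show ?thesis using G by blast
qed

lemma T_agree:
  assumes h: "h \<in> Hom C A B" and h': "h' \<in> Hom C A B"
    and us: "set us \<subseteq> carrier (TO A)" "carrier (TO A) \<subseteq> mspan R (TO A) (set us)"
    and e: "\<And>u. u \<in> set us \<Longrightarrow> TM h u = TM h' u"
  shows "h = h'"
proof -
  have A: "A \<in> Obj C" and B: "B \<in> Obj C" using hom_obj h by auto
  interpret TA: module R "TO A" using Tmod[OF A] .
  interpret TB: module R "TO B" using Tmod[OF B] .
  let ?E = "{y \<in> carrier (TO A). TM h y = TM h' y}"
  have "subm R (TO A) ?E" unfolding subm_def
  proof (intro conjI ballI)
    show "?E \<subseteq> carrier (TO A)" by blast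
    show "\<zero>\<^bsub>TO A\<^esub> \<in> ?E" using T_zero_vec[OF h] T_zero_vec[OF h'] by simp
  next
    fix a b assume "a \<in> ?E" "b \<in> ?E"
    then show "a \<oplus>\<^bsub>TO A\<^esub> b \<in> ?E" using T_add[OF h] T_add[OF h'] by simp
  next
    fix r a assume "r \<in> carrier R" "a \<in> ?E"
    then show "r \<odot>\<^bsub>TO A\<^esub> a \<in> ?E" using T_smult[OF h] T_smult[OF h'] by simp
  qed
  moreover have "set us \<subseteq> ?E" using us(1) e by auto
  ultimately have "mspan R (TO A) (set us) \<subseteq> ?E" by (rule span_least)
  then have "carrier (TO A) \<subseteq> ?E" using us(2) by (rule order_trans[rotated])
  then show ?thesis by (intro faithful[OF h h']) auto
qed

lemma hom_fg:
  assumes A: "A \<in> Obj C" and B: "B \<in> Obj C" and N: "subm R (hom_module C A B) N"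
  shows "\<exists>B0. finite B0 \<and> B0 \<subseteq> N \<and> N \<subseteq> mspan R (hom_module C A B) B0"
proof -
  let ?HM = "hom_module C A B"
  interpret HM: module R ?HM using hmod[OF A B] .
  interpret TB: module R "TO B" using Tmod[OF B] .
  obtain us where us: "set us \<subseteq> carrier (TO A)" "carrier (TO A) \<subseteq> mspan R (TO A) (set us)"
    using obj_span[OF A] by blast
  define k where "k = length us"
  define os where "os = replicate k B"
  have los: "length os = k" unfolding os_def by simp
  have osj: "\<And>j. j < k \<Longrightarrow> os ! j = B" unfolding os_def by simp
  have sos: "set os \<subseteq> Obj C" by (simp add: os_def set_replicate_conv_if B)
  obtain Q \<iota> \<pi> where Bp: "is_biprod os Q \<iota> \<pi>"
    using biprod_exists[OF sos] by blast
  have Q: "Q \<in> Obj C" using biprodD(1)[OF Bp] .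
  interpret TQ: module R "TO Q" using Tmod[OF Q] .
  define \<Theta> where "\<Theta> h = finsum (TO Q) (\<lambda>i. TM (\<iota> i) (TM h (us!i))) {..<k}" for h
  have usc: "\<And>i. i < k \<Longrightarrow> us ! i \<in> carrier (TO A)" using us(1) k_def by auto
  have xin: "\<And>h j. h \<in> Hom C A B \<Longrightarrow> j < length os \<Longrightarrow> TM h (us!j) \<in> carrier (TO (os!j))"
    using T_closed usc osj los by simp
  have Th: "\<Theta> h \<in> carrier (TO Q)" "\<And>j. j < k \<Longrightarrow> TM (\<pi> j) (\<Theta> h) = TM h (us!j)"
    if h: "h \<in> Hom C A B" for h
    using biprod_surj[OF Bp xin[OF h]] unfolding \<Theta>_def los by auto
  have pj: "\<And>j. j < k \<Longrightarrow> \<pi> j \<in> Hom C Q B" using biprodD(3)[OF Bp] osj los by fastforce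
  have lin: "lmap R ?HM (TO Q) \<Theta>" unfolding lmap_def
  proof (intro conjI ballI)
    fix h assume "h \<in> carrier ?HM" then show "\<Theta> h \<in> carrier (TO Q)" using Th by simp
  next
    fix h h' assume h: "h \<in> carrier ?HM" and h': "h' \<in> carrier ?HM"
    then have hh: "h \<in> Hom C A B" "h' \<in> Hom C A B" by auto
    have ha: "hadd C h h' \<in> Hom C A B" using hadd_hom[OF hh] .
    show "\<Theta> (h \<oplus>\<^bsub>?HM\<^esub> h') = \<Theta> h \<oplus>\<^bsub>TO Q\<^esub> \<Theta> h'"
    proof (simp, rule biprod_ext[OF Bp Th(1)[OF ha] TQ.a_closed[OF Th(1)[OF hh(1)] Th(1)[OF hh(2)]]])
      fix j assume "j < length os" then have j: "j < k" using los by simp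
      show "TM (\<pi> j) (\<Theta> (hadd C h h')) = TM (\<pi> j) (\<Theta> h \<oplus>\<^bsub>TO Q\<^esub> \<Theta> h')"
        using Th(2)[OF ha j] T_add[OF pj[OF j] Th(1)[OF hh(1)] Th(1)[OF hh(2)]] Th(2)[OF hh(1) j] Th(2)[OF hh(2) j]
          T_hadd[OF hh usc[OF j]] by simp
    qed
  next
    fix r h assume r: "r \<in> carrier R" and h: "h \<in> carrier ?HM"
    then have hh: "h \<in> Hom C A B" by auto
    have ha: "hsmult C r h \<in> Hom C A B" using hsmult_hom[OF r hh] .
    show "\<Theta> (r \<odot>\<^bsub>?HM\<^esub> h) = r \<odot>\<^bsub>TO Q\<^esub> \<Theta> h"
    proof (simp, rule biprod_ext[OF Bp Th(1)[OF ha] TQ.smult_closed[OF r Th(1)[OF hh]]])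
      fix j assume "j < length os" then have j: "j < k" using los by simp
      show "TM (\<pi> j) (\<Theta> (hsmult C r h)) = TM (\<pi> j) (r \<odot>\<^bsub>TO Q\<^esub> \<Theta> h)"
        using Th(2)[OF ha j] T_smult[OF pj[OF j] r Th(1)[OF hh]] Th(2)[OF hh j]
          T_hsmult[OF hh r usc[OF j]] by simp
    qed
  qed
  have inj: "h = h'" if h: "h \<in> Hom C A B" and h': "h' \<in> Hom C A B" and e: "\<Theta> h = \<Theta> h'" for h h'
  proof (rule T_agree[OF h h' us])
    fix u assume "u \<in> set us"
    then obtain j where j: "j < k" "u = us ! j" unfolding k_def by (metis in_set_conv_nth)
    show "TM h u = TM h' u" using Th(2)[OF h j(1)] Th(2)[OF h' j(1)] e j(2) by simp
  qed
  have NH: "N \<subseteq> Hom C A B" using N unfolding subm_def by simp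
  have ImN: "subm R (TO Q) (\<Theta> ` N)" using lin_map_image_subm'[OF hmod[OF A B] Tmod[OF Q] lin N] .
  obtain G' where G': "finite G'" "G' \<subseteq> carrier (TO Q)" "carrier (TO Q) \<subseteq> mspan R (TO Q) G'"
    using fg_span[OF Tmod[OF Q] Tfg[OF Q]] by blast
  have "\<Theta> ` N \<subseteq> mspan R (TO Q) G'" using ImN G'(3) unfolding subm_def by blast
  then obtain B' where B': "finite B'" "B' \<subseteq> \<Theta> ` N" "\<Theta> ` N \<subseteq> mspan R (TO Q) B'"
    using TQ.noeth_fg[OF noeth G'(1) G'(2) ImN] by blast
  define ch where "ch b = (SOME h. h \<in> N \<and> \<Theta> h = b)" for b
  have ch: "ch b \<in> N \<and> \<Theta> (ch b) = b" if "b \<in> B'" for b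
  proof -
    have "\<exists>h. h \<in> N \<and> \<Theta> h = b" using B'(2) that by blast
    then show ?thesis unfolding ch_def by (rule someI_ex)
  qed
  define B0 where "B0 = ch ` B'"
  have B0N: "B0 \<subseteq> N" unfolding B0_def using ch by blast
  have TB0: "\<Theta> ` B0 = B'" unfolding B0_def image_image using ch by (simp cong: image_cong)
  have B0H: "B0 \<subseteq> carrier ?HM" using B0N NH by simp
  show ?thesis
  proof (intro exI conjI)
    show "finite B0" unfolding B0_def using B'(1) by simp
    show "B0 \<subseteq> N" by (fact B0N)
    show "N \<subseteq> mspan R ?HM B0"
    proof
      fix h assume h: "h \<in> N"
      then have "\<Theta> h \<in> mspan R (TO Q) (\<Theta> ` B0)" using B'(3) TB0 by blast
      also have "\<dots> \<subseteq> \<Theta> ` mspan R ?HM B0" by (rule span_image[OF hmod[OF A B] Tmod[OF Q] lin B0H])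
      finally obtain h' where h': "h' \<in> mspan R ?HM B0" "\<Theta> h = \<Theta> h'" by blast
      have "h' \<in> Hom C A B" using HM.span_carrier[OF B0H] h'(1) by auto
      then have "h = h'" using inj NH h h'(2) by blast
      then show "h \<in> mspan R ?HM B0" using h'(1) by simp
    qed
  qed
qed

end

context fctx
begin

lemma core:
  assumes W: "W \<in> Obj C" and phi: "lin_map R (TO W) (TO W) \<phi>"
    and comm: "\<And>e. lin_map R (TO W) (TO W) e \<Longrightarrow>
        (\<forall>g\<in>Hom C W W. \<forall>y\<in>carrier (TO W). TM g (e y) = e (TM g y)) \<Longrightarrow>
        \<forall>y\<in>carrier (TO W). \<phi> (e y) = e (\<phi> y)"
  shows "\<exists>g\<in>Hom C W W. \<forall>y\<in>carrier (TO W). TM g y = \<phi> y"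
proof -
  interpret TW: module R "TO W" using Tmod[OF W] .
  obtain vs where vs: "set vs \<subseteq> carrier (TO W)" "carrier (TO W) \<subseteq> mspan R (TO W) (set vs)"
    using obj_span[OF W] by blast
  define n where "n = length vs"
  have vsc: "\<And>j. j < n \<Longrightarrow> vs ! j \<in> carrier (TO W)" using vs(1) n_def by auto
  define os where "os = replicate n W"
  have los: "length os = n" unfolding os_def by simp
  have osj: "\<And>j. j < n \<Longrightarrow> os ! j = W" unfolding os_def by simp
  have sos: "set os \<subseteq> Obj C" by (simp add: os_def set_replicate_conv_if W)
  obtain Q \<iota> \<pi> where Bp: "is_biprod os Q \<iota> \<pi>" using biprod_exists[OF sos] by blast
  have Q: "Q \<in> Obj C" using biprodD(1)[OF Bp] .
  interpret TQ: module R "TO Q" using Tmod[OF Q] .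
  have pj: "\<And>j. j < n \<Longrightarrow> \<pi> j \<in> Hom C Q W" using biprodD(3)[OF Bp] osj los by fastforce
  define vv where "vv = finsum (TO Q) (\<lambda>k. TM (\<iota> k) (vs!k)) {..<n}"
  have vvx: "\<And>j. j < length os \<Longrightarrow> vs ! j \<in> carrier (TO (os ! j))" using vsc osj los by simp
  have vv: "vv \<in> carrier (TO Q)" "\<And>j. j < n \<Longrightarrow> TM (\<pi> j) vv = vs ! j"
    using biprod_surj[OF Bp vvx] unfolding vv_def los by auto
  let ?HM = "hom_module C Q W"
  interpret HM: module R ?HM using hmod[OF Q W] .
  define Ev where "Ev = {h \<in> Hom C Q W. TM h vv = \<zero>\<^bsub>TO W\<^esub>}"
  have Evs: "subm R ?HM Ev" unfolding subm_def Ev_def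
  proof (intro conjI ballI)
    show "{h \<in> Hom C Q W. TM h vv = \<zero>\<^bsub>TO W\<^esub>} \<subseteq> carrier ?HM" by auto
    show "\<zero>\<^bsub>?HM\<^esub> \<in> {h \<in> Hom C Q W. TM h vv = \<zero>\<^bsub>TO W\<^esub>}"
      using hzero_hom[OF Q W] T_hzero[OF Q W vv(1)] by simp
  next
    fix a b assume "a \<in> {h \<in> Hom C Q W. TM h vv = \<zero>\<^bsub>TO W\<^esub>}" "b \<in> {h \<in> Hom C Q W. TM h vv = \<zero>\<^bsub>TO W\<^esub>}"
    then show "a \<oplus>\<^bsub>?HM\<^esub> b \<in> {h \<in> Hom C Q W. TM h vv = \<zero>\<^bsub>TO W\<^esub>}"
      using hadd_hom[of _ Q W] T_hadd[of _ Q W] vv(1) by auto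
  next
    fix r a assume "r \<in> carrier R" "a \<in> {h \<in> Hom C Q W. TM h vv = \<zero>\<^bsub>TO W\<^esub>}"
    then show "r \<odot>\<^bsub>?HM\<^esub> a \<in> {h \<in> Hom C Q W. TM h vv = \<zero>\<^bsub>TO W\<^esub>}"
      using hsmult_hom[of _ _ Q W] T_hsmult[of _ Q W] vv(1) by auto
  qed
  obtain B0 where B0: "finite B0" "B0 \<subseteq> Ev" "Ev \<subseteq> mspan R ?HM B0" using hom_fg[OF Q W Evs] by blast
  obtain hs where hs: "set hs = B0" using finite_list[OF B0(1)] by blast
  have hsH: "set hs \<subseteq> Hom C Q W" using hs B0(2) Ev_def by auto
  obtain P \<sigma> where P: "\<sigma> \<in> Hom C P Q"
    "\<forall>s\<in>carrier (TO P). \<forall>h\<in>set hs. TM h (TM \<sigma> s) = \<zero>\<^bsub>TO W\<^esub>"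
    "\<forall>y\<in>carrier (TO Q). (\<forall>h\<in>set hs. TM h y = \<zero>\<^bsub>TO W\<^esub>) \<longrightarrow> y \<in> TM \<sigma> ` carrier (TO P)"
    using iter_kernel[OF Q W hsH] by blast
  have Po: "P \<in> Obj C" using hom_obj P(1) by blast
  interpret TP: module R "TO P" using Tmod[OF Po] .
  have P0: "TM h (TM \<sigma> s) = \<zero>\<^bsub>TO W\<^esub>" if s: "s \<in> carrier (TO P)" and h: "h \<in> Ev" for s h
  proof -
    let ?w = "TM \<sigma> s"
    have w: "?w \<in> carrier (TO Q)" using T_closed[OF P(1) s] .
    let ?K = "{h \<in> Hom C Q W. TM h ?w = \<zero>\<^bsub>TO W\<^esub>}"
    have Ks: "subm R ?HM ?K" unfolding subm_def
    proof (intro conjI ballI)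
      show "?K \<subseteq> carrier ?HM" by auto
      show "\<zero>\<^bsub>?HM\<^esub> \<in> ?K" using hzero_hom[OF Q W] T_hzero[OF Q W w] by simp
    next
      fix a b assume "a \<in> ?K" "b \<in> ?K"
      then show "a \<oplus>\<^bsub>?HM\<^esub> b \<in> ?K" using hadd_hom[of _ Q W] T_hadd[of _ Q W] w by auto
    next
      fix r a assume "r \<in> carrier R" "a \<in> ?K"
      then show "r \<odot>\<^bsub>?HM\<^esub> a \<in> ?K" using hsmult_hom[of _ _ Q W] T_hsmult[of _ Q W] w by auto
    qed
    have "B0 \<subseteq> ?K" using P(2) s hs B0(2) Ev_def by auto
    then have "mspan R ?HM B0 \<subseteq> ?K" using span_least[OF Ks] by blast
    then show ?thesis using h B0(3) by blast
  qed
  have "vv \<in> TM \<sigma> ` carrier (TO P)"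
    using P(3) vv(1) hs B0(2) Ev_def by auto
  then obtain s0 where s0: "s0 \<in> carrier (TO P)" "TM \<sigma> s0 = vv" by blast
  have Rch: "\<exists>h\<in>Hom C Q W. TM h vv = y" if y: "y \<in> carrier (TO W)" for y
  proof -
    have lm: "lmap R ?HM (TO W) (\<lambda>h. TM h vv)" unfolding lmap_def
      using T_closed[of _ Q W] T_hadd[of _ Q W] T_hsmult[of _ Q W] vv(1) by auto
    have "subm R ?HM (carrier ?HM)" unfolding subm_def
      using hzero_hom[OF Q W] hadd_hom[of _ Q W] hsmult_hom[of _ _ Q W] by auto
    then have Rs: "subm R (TO W) ((\<lambda>h. TM h vv) ` carrier ?HM)"
      using lin_map_image_subm'[OF hmod[OF Q W] Tmod[OF W] lm] by blast
    have "set vs \<subseteq> (\<lambda>h. TM h vv) ` carrier ?HM"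
    proof
      fix v assume "v \<in> set vs"
      then obtain j where j: "j < n" "v = vs ! j" unfolding n_def by (metis in_set_conv_nth)
      have "v = TM (\<pi> j) vv" using vv(2)[OF j(1)] j(2) by simp
      moreover have "\<pi> j \<in> carrier ?HM" using pj[OF j(1)] by simp
      ultimately show "v \<in> (\<lambda>h. TM h vv) ` carrier ?HM" by (rule image_eqI)
    qed
    then have "mspan R (TO W) (set vs) \<subseteq> (\<lambda>h. TM h vv) ` carrier ?HM" by (rule span_least[OF Rs])
    then have "y \<in> (\<lambda>h. TM h vv) ` carrier ?HM" using vs(2) y by blast
    then show ?thesis by auto
  qed
  define ew where "ew w y = TM (SOME h. h \<in> Hom C Q W \<and> TM h vv = y) w" for w y
  have wd: "ew (TM \<sigma> s) (TM h vv) = TM h (TM \<sigma> s)"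
    if s: "s \<in> carrier (TO P)" and h: "h \<in> Hom C Q W" for s h
  proof -
    let ?w = "TM \<sigma> s"
    have w: "?w \<in> carrier (TO Q)" using T_closed[OF P(1) s] .
    define h' where "h' = (SOME h'. h' \<in> Hom C Q W \<and> TM h' vv = TM h vv)"
    have h': "h' \<in> Hom C Q W \<and> TM h' vv = TM h vv"
      unfolding h'_def by (rule someI[of _ h]) (use h in simp)
    have d: "hsub h' h \<in> Hom C Q W" using hsub_hom h h' by blast
    have "TM (hsub h' h) vv = \<zero>\<^bsub>TO W\<^esub>"
      using T_hsub[OF conjunct1[OF h'] h vv(1)] h' T_closed[OF h vv(1)] by (simp add: a_minus_def TW.r_neg)
    then have "hsub h' h \<in> Ev" unfolding Ev_def using d by simp
    then have "TM (hsub h' h) ?w = \<zero>\<^bsub>TO W\<^esub>" using P0[OF s] by blast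
    then have "TM h' ?w \<ominus>\<^bsub>TO W\<^esub> TM h ?w = \<zero>\<^bsub>TO W\<^esub>" using T_hsub[OF conjunct1[OF h'] h w] by simp
    then have "TM h' ?w = TM h ?w" using TW.ag_eq T_closed[OF conjunct1[OF h'] w] T_closed[OF h w] by blast
    then show ?thesis unfolding ew_def h'_def by simp
  qed
  have ewc: "\<forall>y\<in>carrier (TO W). \<phi> (ew (TM \<sigma> s) y) = ew (TM \<sigma> s) (\<phi> y)" if s: "s \<in> carrier (TO P)" for s
  proof (rule comm)
    let ?w = "TM \<sigma> s"
    have w: "?w \<in> carrier (TO Q)" using T_closed[OF P(1) s] .
    show "lin_map R (TO W) (TO W) (ew ?w)" unfolding lin_map_def
    proof (intro conjI ballI)
      fix y assume "y \<in> carrier (TO W)"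
      then obtain h where h: "h \<in> Hom C Q W" "TM h vv = y" using Rch by blast
      show "ew ?w y \<in> carrier (TO W)" using wd[OF s h(1)] h T_closed[OF h(1) w] by simp
    next
      fix y1 y2 assume "y1 \<in> carrier (TO W)" "y2 \<in> carrier (TO W)"
      then obtain h1 h2 where h: "h1 \<in> Hom C Q W" "TM h1 vv = y1" "h2 \<in> Hom C Q W" "TM h2 vv = y2"
        using Rch by meson
      have ha: "hadd C h1 h2 \<in> Hom C Q W" using hadd_hom h by blast
      have "ew ?w (y1 \<oplus>\<^bsub>TO W\<^esub> y2) = ew ?w (TM (hadd C h1 h2) vv)"
        using T_hadd[OF h(1) h(3) vv(1)] h by simp
      also have "\<dots> = TM (hadd C h1 h2) ?w" using wd[OF s ha] .
      also have "\<dots> = TM h1 ?w \<oplus>\<^bsub>TO W\<^esub> TM h2 ?w" using T_hadd[OF h(1) h(3) w] .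
      also have "\<dots> = ew ?w y1 \<oplus>\<^bsub>TO W\<^esub> ew ?w y2" using wd[OF s h(1)] wd[OF s h(3)] h by simp
      finally show "ew ?w (y1 \<oplus>\<^bsub>TO W\<^esub> y2) = ew ?w y1 \<oplus>\<^bsub>TO W\<^esub> ew ?w y2" .
    next
      fix r y assume r: "r \<in> carrier R" and "y \<in> carrier (TO W)"
      then obtain h where h: "h \<in> Hom C Q W" "TM h vv = y" using Rch by blast
      have ha: "hsmult C r h \<in> Hom C Q W" using hsmult_hom r h by blast
      have "ew ?w (r \<odot>\<^bsub>TO W\<^esub> y) = ew ?w (TM (hsmult C r h) vv)"
        using T_hsmult[OF h(1) r vv(1)] h by simp
      also have "\<dots> = TM (hsmult C r h) ?w" using wd[OF s ha] .
      also have "\<dots> = r \<odot>\<^bsub>TO W\<^esub> TM h ?w" using T_hsmult[OF h(1) r w] .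
      also have "\<dots> = r \<odot>\<^bsub>TO W\<^esub> ew ?w y" using wd[OF s h(1)] h by simp
      finally show "ew ?w (r \<odot>\<^bsub>TO W\<^esub> y) = r \<odot>\<^bsub>TO W\<^esub> ew ?w y" .
    qed
    show "\<forall>g\<in>Hom C W W. \<forall>y\<in>carrier (TO W). TM g (ew ?w y) = ew ?w (TM g y)"
    proof (intro ballI)
      fix g y assume g: "g \<in> Hom C W W" and "y \<in> carrier (TO W)"
      then obtain h where h: "h \<in> Hom C Q W" "TM h vv = y" using Rch by blast
      have gh: "comp C g h \<in> Hom C Q W" using comp_hom[OF h(1) g] .
      have "ew ?w (TM g y) = ew ?w (TM (comp C g h) vv)" using T_comp[OF h(1) g vv(1)] h by simp
      also have "\<dots> = TM (comp C g h) ?w" using wd[OF s gh] .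
      also have "\<dots> = TM g (TM h ?w)" using T_comp[OF h(1) g w] .
      also have "\<dots> = TM g (ew ?w y)" using wd[OF s h(1)] h by simp
      finally show "TM g (ew ?w y) = ew ?w (TM g y)" by simp
    qed
  qed
  define os2 where "os2 = replicate n P"
  have los2: "length os2 = n" unfolding os2_def by simp
  have os2j: "\<And>j. j < n \<Longrightarrow> os2 ! j = P" unfolding os2_def by simp
  have sos2: "set os2 \<subseteq> Obj C" by (simp add: os2_def set_replicate_conv_if Po)
  obtain Sb \<iota>s \<pi>s where Bs: "is_biprod os2 Sb \<iota>s \<pi>s" using biprod_exists[OF sos2] by blast
  have Sb: "Sb \<in> Obj C" using biprodD(1)[OF Bs] .
  interpret TS: module R "TO Sb" using Tmod[OF Sb] .
  have psj: "\<And>j. j < n \<Longrightarrow> \<pi>s j \<in> Hom C Sb P" using biprodD(3)[OF Bs] os2j los2 by fastforce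
  have isj: "\<And>j. j < n \<Longrightarrow> \<iota>s j \<in> Hom C P Sb" using biprodD(2)[OF Bs] os2j los2 by fastforce
  define hp where "hp j = (SOME h. h \<in> Hom C Q W \<and> TM h vv = \<phi> (vs ! j))" for j
  have hp: "hp j \<in> Hom C Q W \<and> TM (hp j) vv = \<phi> (vs ! j)" if j: "j < n" for j
  proof -
    have "\<phi> (vs ! j) \<in> carrier (TO W)" using phi vsc[OF j] unfolding lin_map_def by blast
    then have "\<exists>h. h \<in> Hom C Q W \<and> TM h vv = \<phi> (vs ! j)" using Rch by blast
    then show ?thesis unfolding hp_def by (rule someI_ex)
  qed
  define a where "a j = comp C (\<pi> j) (comp C \<sigma> (\<pi>s j))" for j
  define b where "b j = comp C (hp j) (comp C \<sigma> (\<pi>s j))" for j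
  have ah: "\<And>j. j < n \<Longrightarrow> a j \<in> Hom C Sb W" unfolding a_def
    using comp_hom[OF comp_hom[OF psj P(1)] pj] by blast
  have bh: "\<And>j. j < n \<Longrightarrow> b j \<in> Hom C Sb W" unfolding b_def
    using comp_hom[OF comp_hom[OF psj P(1)] conjunct1[OF hp]] by blast
  define \<alpha> where "\<alpha> = msum Sb W a n"
  define \<beta> where "\<beta> = msum Sb W b n"
  have \<alpha>: "\<alpha> \<in> Hom C Sb W" "\<And>s. s \<in> carrier (TO Sb) \<Longrightarrow> TM \<alpha> s = finsum (TO W) (\<lambda>j. TM (a j) s) {..<n}"
    using msum[OF Sb W ah] unfolding \<alpha>_def by auto
  have \<beta>: "\<beta> \<in> Hom C Sb W" "\<And>s. s \<in> carrier (TO Sb) \<Longrightarrow> TM \<beta> s = finsum (TO W) (\<lambda>j. TM (b j) s) {..<n}"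
    using msum[OF Sb W bh] unfolding \<beta>_def by auto
  have Ta: "TM (a j) s = TM (\<pi> j) (TM \<sigma> (TM (\<pi>s j) s))" if j: "j < n" and s: "s \<in> carrier (TO Sb)" for j s
    unfolding a_def using T_comp[OF comp_hom[OF psj[OF j] P(1)] pj[OF j] s] T_comp[OF psj[OF j] P(1) s] by simp
  have Tb: "TM (b j) s = TM (hp j) (TM \<sigma> (TM (\<pi>s j) s))" if j: "j < n" and s: "s \<in> carrier (TO Sb)" for j s
    unfolding b_def using T_comp[OF comp_hom[OF psj[OF j] P(1)] conjunct1[OF hp[OF j]] s] T_comp[OF psj[OF j] P(1) s] by simp
  have key: "TM \<beta> s = \<phi> (TM \<alpha> s)" if s: "s \<in> carrier (TO Sb)" for s
  proof -
    have bj: "TM (b j) s = \<phi> (TM (a j) s)" if j: "j < n" for j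
    proof -
      let ?p = "TM (\<pi>s j) s"
      have p: "?p \<in> carrier (TO P)" using T_closed[OF psj[OF j] s] .
      have "TM (b j) s = ew (TM \<sigma> ?p) (TM (hp j) vv)" using Tb[OF j s] wd[OF p conjunct1[OF hp[OF j]]] by simp
      also have "\<dots> = ew (TM \<sigma> ?p) (\<phi> (vs ! j))" using hp[OF j] by simp
      also have "\<dots> = \<phi> (ew (TM \<sigma> ?p) (vs ! j))" using ewc[OF p] vsc[OF j] by simp
      also have "\<dots> = \<phi> (ew (TM \<sigma> ?p) (TM (\<pi> j) vv))" using vv(2)[OF j] by simp
      also have "\<dots> = \<phi> (TM (a j) s)" using wd[OF p pj[OF j]] Ta[OF j s] by simp
      finally show ?thesis .
    qed
    have fa: "(\<lambda>j. TM (a j) s) \<in> {..<n} \<rightarrow> carrier (TO W)" using T_closed[OF ah s] by simp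
    have fb: "(\<lambda>j. \<phi> (TM (a j) s)) \<in> {..<n} \<rightarrow> carrier (TO W)"
      using lin_map_closed[OF phi] T_closed[OF ah s] by simp
    have "TM \<beta> s = finsum (TO W) (\<lambda>j. TM (b j) s) {..<n}" using \<beta>(2)[OF s] .
    also have "\<dots> = finsum (TO W) (\<lambda>j. \<phi> (TM (a j) s)) {..<n}"
      by (rule TW.finsum_cong'[OF refl fb]) (simp add: bj)
    also have "\<dots> = \<phi> (finsum (TO W) (\<lambda>j. TM (a j) s) {..<n})"
      by (rule lin_map_finsum[OF Tmod[OF W] Tmod[OF W] phi _ fa, symmetric]) simp
    also have "\<dots> = \<phi> (TM \<alpha> s)" using \<alpha>(2)[OF s] by simp
    finally show ?thesis .
  qed
  have surj: "carrier (TO W) \<subseteq> TM \<alpha> ` carrier (TO Sb)"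
  proof -
    have Is: "subm R (TO W) (TM \<alpha> ` carrier (TO Sb))" using lin_map_image_subm[OF Tmod[OF Sb] Tmod[OF W] Tlin[OF \<alpha>(1)]] .
    have "set vs \<subseteq> TM \<alpha> ` carrier (TO Sb)"
    proof
      fix v assume "v \<in> set vs"
      then obtain j where j: "j < n" "v = vs ! j" unfolding n_def by (metis in_set_conv_nth)
      let ?s = "TM (\<iota>s j) s0"
      have sc: "?s \<in> carrier (TO Sb)" using T_closed[OF isj[OF j(1)] s0(1)] .
      have ps: "TM (\<pi>s k) ?s = (if k = j then s0 else \<zero>\<^bsub>TO P\<^esub>)" if k: "k < n" for k
        using biprodD(4)[OF Bs, of k j s0] k j(1) los2 os2j s0(1) by auto
      have "TM \<alpha> ?s = finsum (TO W) (\<lambda>k. TM (a k) ?s) {..<n}" using \<alpha>(2)[OF sc] .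
      also have "\<dots> = finsum (TO W) (\<lambda>k. if j = k then vs ! j else \<zero>\<^bsub>TO W\<^esub>) {..<n}"
      proof (rule TW.finsum_cong')
        show "(\<lambda>k. if j = k then vs ! j else \<zero>\<^bsub>TO W\<^esub>) \<in> {..<n} \<rightarrow> carrier (TO W)"
          using vsc[OF j(1)] by auto
        fix k assume "k \<in> {..<n}" then have k: "k < n" by simp
        show "TM (a k) ?s = (if j = k then vs ! j else \<zero>\<^bsub>TO W\<^esub>)"
        proof (cases "k = j")
          case True
          then show ?thesis using Ta[OF k sc] ps[OF k] s0(2) vv(2)[OF j(1)] by simp
        next
          case False
          then show ?thesis using Ta[OF k sc] ps[OF k] T_zero_vec[OF P(1)] T_zero_vec[OF pj[OF k]] by auto
        qed
      qed simp
      also have "\<dots> = vs ! j"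
        using TW.finsum_singleton[of j "{..<n}" "\<lambda>_. vs ! j"] j(1) vsc[OF j(1)] by auto
      finally have "v = TM \<alpha> ?s" using j(2) by simp
      then show "v \<in> TM \<alpha> ` carrier (TO Sb)" using sc by (rule image_eqI)
    qed
    then have "mspan R (TO W) (set vs) \<subseteq> TM \<alpha> ` carrier (TO Sb)" by (rule span_least[OF Is])
    then show ?thesis using vs(2) by (rule order_trans[rotated])
  qed
  have epi: "is_epi C Sb W \<alpha>" unfolding is_epi_def
  proof (intro conjI ballI impI)
    show "\<alpha> \<in> Hom C Sb W" by (fact \<alpha>(1))
    fix Z g h assume Z: "Z \<in> Obj C" and g: "g \<in> Hom C W Z" and h: "h \<in> Hom C W Z"
      and e: "comp C g \<alpha> = comp C h \<alpha>"
    show "g = h"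
    proof (rule faithful[OF g h])
      fix y assume "y \<in> carrier (TO W)"
      then obtain s where s: "s \<in> carrier (TO Sb)" "y = TM \<alpha> s" using surj by blast
      show "TM g y = TM h y" using T_comp[OF \<alpha>(1) g s(1)] T_comp[OF \<alpha>(1) h s(1)] e s(2) by simp
    qed
  qed
  obtain G g0 where g0: "g0 \<in> Hom C G Sb" "is_cokernel C G Sb g0 W \<alpha>" using ab_epi[OF epi] by blast
  have G: "G \<in> Obj C" using hom_obj g0(1) by blast
  have ag: "comp C \<alpha> g0 = hzero C G W" using cokD[OF g0(2)] by blast
  have bg: "comp C \<beta> g0 = hzero C G W"
  proof (rule faithful[OF comp_hom[OF g0(1) \<beta>(1)] hzero_hom[OF G W]])
    fix x assume x: "x \<in> carrier (TO G)"
    have gx: "TM g0 x \<in> carrier (TO Sb)" using T_closed[OF g0(1) x] .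
    have "TM (comp C \<beta> g0) x = \<phi> (TM \<alpha> (TM g0 x))" using T_comp[OF g0(1) \<beta>(1) x] key[OF gx] by simp
    also have "\<dots> = \<phi> (TM (comp C \<alpha> g0) x)" using T_comp[OF g0(1) \<alpha>(1) x] by simp
    also have "\<dots> = \<phi> \<zero>\<^bsub>TO W\<^esub>" using ag T_hzero[OF G W x] by simp
    also have "\<dots> = \<zero>\<^bsub>TO W\<^esub>" using lin_map_zero[OF Tmod[OF W] Tmod[OF W] phi] .
    finally show "TM (comp C \<beta> g0) x = TM (hzero C G W) x" using T_hzero[OF G W x] by simp
  qed
  obtain u where u: "u \<in> Hom C W W" "comp C u \<alpha> = \<beta>"
    using ex1_implies_ex[OF cokU[OF g0(2) W \<beta>(1) bg]] by blast
  show ?thesis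
  proof (intro bexI ballI)
    show "u \<in> Hom C W W" by (fact u(1))
    fix y assume "y \<in> carrier (TO W)"
    then obtain s where s: "s \<in> carrier (TO Sb)" "y = TM \<alpha> s" using surj by blast
    have "TM u y = TM (comp C u \<alpha>) s" using T_comp[OF \<alpha>(1) u(1) s(1)] s(2) by simp
    also have "\<dots> = \<phi> y" using u(2) key[OF s(1)] s(2) by simp
    finally show "TM u y = \<phi> y" .
  qed
qed

end

context fctx
begin

lemma full: "Ttilde_full R C TO TM"
  unfolding Ttilde_full_def
proof (intro ballI)
  fix X Y \<phi> assume X: "X \<in> Obj C" and Y: "Y \<in> Obj C" and ph: "\<phi> \<in> CT_hom R C TO TM X Y"
  obtain F where F: "finite F" "F \<subseteq> Obj C" "X \<in> F" "Y \<in> F" "lin_map R (TO X) (TO Y) \<phi>"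
    "\<forall>e \<in> End_TF R C TO TM F. \<forall>v \<in> carrier (TO X). \<phi> (e X v) = e Y (\<phi> v)"
    using ph unfolding CT_hom_def by blast
  obtain xs where xs: "set xs = F" using finite_list[OF F(1)] by blast
  obtain W \<iota> \<pi> where Bp: "is_biprod xs W \<iota> \<pi>" using biprod_exists F(2) xs by blast
  have W: "W \<in> Obj C" using biprodD(1)[OF Bp] .
  interpret TW: module R "TO W" using Tmod[OF W] .
  define idx where "idx p = (SOME j. j < length xs \<and> xs ! j = p)" for p
  have idx: "idx p < length xs \<and> xs ! idx p = p" if "p \<in> F" for p
  proof -
    have "\<exists>j. j < length xs \<and> xs ! j = p" using that xs by (metis in_set_conv_nth)
    then show ?thesis unfolding idx_def by (rule someI_ex)
  qed
  have ih: "\<iota> (idx p) \<in> Hom C p W" "\<pi> (idx p) \<in> Hom C W p" if "p \<in> F" for p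
    using biprodD(2,3)[OF Bp, of "idx p"] idx[OF that] by auto
  have pi_iota: "TM (\<pi> (idx p)) (TM (\<iota> (idx p)) v) = v" if "p \<in> F" "v \<in> carrier (TO p)" for p v
    using biprodD(4)[OF Bp, of "idx p" "idx p" v] idx[OF that(1)] that(2) by simp
  define a where "a = idx X"
  define b where "b = idx Y"
  have ia: "\<iota> a \<in> Hom C X W" "\<pi> a \<in> Hom C W X" using ih[OF F(3)] unfolding a_def by auto
  have ib: "\<iota> b \<in> Hom C Y W" "\<pi> b \<in> Hom C W Y" using ih[OF F(4)] unfolding b_def by auto
  define \<phi>' where "\<phi>' y = TM (\<iota> b) (\<phi> (TM (\<pi> a) y))" for y
  have phc: "\<And>v. v \<in> carrier (TO X) \<Longrightarrow> \<phi> v \<in> carrier (TO Y)" using lin_map_closed[OF F(5)] .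
  have lphi: "lin_map R (TO W) (TO W) \<phi>'" unfolding lin_map_def \<phi>'_def
  proof (intro conjI ballI)
    fix y assume y: "y \<in> carrier (TO W)"
    show "TM (\<iota> b) (\<phi> (TM (\<pi> a) y)) \<in> carrier (TO W)"
      using T_closed[OF ib(1) phc[OF T_closed[OF ia(2) y]]] .
  next
    fix y z assume y: "y \<in> carrier (TO W)" and z: "z \<in> carrier (TO W)"
    show "TM (\<iota> b) (\<phi> (TM (\<pi> a) (y \<oplus>\<^bsub>TO W\<^esub> z))) =
          TM (\<iota> b) (\<phi> (TM (\<pi> a) y)) \<oplus>\<^bsub>TO W\<^esub> TM (\<iota> b) (\<phi> (TM (\<pi> a) z))"
      using T_add[OF ia(2) y z] lin_map_add[OF F(5) T_closed[OF ia(2) y] T_closed[OF ia(2) z]]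
        T_add[OF ib(1) phc[OF T_closed[OF ia(2) y]] phc[OF T_closed[OF ia(2) z]]] by simp
  next
    fix r y assume r: "r \<in> carrier R" and y: "y \<in> carrier (TO W)"
    show "TM (\<iota> b) (\<phi> (TM (\<pi> a) (r \<odot>\<^bsub>TO W\<^esub> y))) = r \<odot>\<^bsub>TO W\<^esub> TM (\<iota> b) (\<phi> (TM (\<pi> a) y))"
      using T_smult[OF ia(2) r y] lin_map_smult[OF F(5) r T_closed[OF ia(2) y]]
        T_smult[OF ib(1) r phc[OF T_closed[OF ia(2) y]]] by simp
  qed
  have comm: "\<forall>y\<in>carrier (TO W). \<phi>' (e y) = e (\<phi>' y)"
    if le: "lin_map R (TO W) (TO W) e"
      and ec: "\<forall>g\<in>Hom C W W. \<forall>y\<in>carrier (TO W). TM g (e y) = e (TM g y)" for e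
  proof
    have ecl: "\<And>y. y \<in> carrier (TO W) \<Longrightarrow> e y \<in> carrier (TO W)" using lin_map_closed[OF le] .
    define eF where "eF p v = TM (\<pi> (idx p)) (e (TM (\<iota> (idx p)) v))" for p v
    \<comment> \<open>absorption: e commutes with the idempotent of a summand\<close>
    have absorb: "e (TM (\<iota> (idx p)) v) = TM (\<iota> (idx p)) (eF p v)" if p: "p \<in> F" and v: "v \<in> carrier (TO p)" for p v
    proof -
      let ?E = "comp C (\<iota> (idx p)) (\<pi> (idx p))"
      have E: "?E \<in> Hom C W W" using comp_hom[OF ih(2)[OF p] ih(1)[OF p]] .
      have iv: "TM (\<iota> (idx p)) v \<in> carrier (TO W)" using T_closed[OF ih(1)[OF p] v] .
      have "TM ?E (TM (\<iota> (idx p)) v) = TM (\<iota> (idx p)) v"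
        using T_comp[OF ih(2)[OF p] ih(1)[OF p] iv] pi_iota[OF p v] by simp
      then have "e (TM (\<iota> (idx p)) v) = e (TM ?E (TM (\<iota> (idx p)) v))" by simp
      also have "\<dots> = TM ?E (e (TM (\<iota> (idx p)) v))" using ec E iv by simp
      also have "\<dots> = TM (\<iota> (idx p)) (eF p v)"
        unfolding eF_def using T_comp[OF ih(2)[OF p] ih(1)[OF p] ecl[OF iv]] by simp
      finally show ?thesis .
    qed
    have eFE: "eF \<in> End_TF R C TO TM F" unfolding End_TF_def
    proof (intro CollectI conjI ballI)
      fix p assume p: "p \<in> F"
      show "lin_map R (TO p) (TO p) (eF p)" unfolding lin_map_def eF_def
      proof (intro conjI ballI)
        fix v assume v: "v \<in> carrier (TO p)"
        show "TM (\<pi> (idx p)) (e (TM (\<iota> (idx p)) v)) \<in> carrier (TO p)"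
          using T_closed[OF ih(2)[OF p] ecl[OF T_closed[OF ih(1)[OF p] v]]] .
      next
        fix v w assume v: "v \<in> carrier (TO p)" and w: "w \<in> carrier (TO p)"
        show "TM (\<pi> (idx p)) (e (TM (\<iota> (idx p)) (v \<oplus>\<^bsub>TO p\<^esub> w))) =
              TM (\<pi> (idx p)) (e (TM (\<iota> (idx p)) v)) \<oplus>\<^bsub>TO p\<^esub> TM (\<pi> (idx p)) (e (TM (\<iota> (idx p)) w))"
          using T_add[OF ih(1)[OF p] v w] lin_map_add[OF le T_closed[OF ih(1)[OF p] v] T_closed[OF ih(1)[OF p] w]]
            T_add[OF ih(2)[OF p] ecl[OF T_closed[OF ih(1)[OF p] v]] ecl[OF T_closed[OF ih(1)[OF p] w]]] by simp
      next
        fix r v assume r: "r \<in> carrier R" and v: "v \<in> carrier (TO p)"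
        show "TM (\<pi> (idx p)) (e (TM (\<iota> (idx p)) (r \<odot>\<^bsub>TO p\<^esub> v))) = r \<odot>\<^bsub>TO p\<^esub> TM (\<pi> (idx p)) (e (TM (\<iota> (idx p)) v))"
          using T_smult[OF ih(1)[OF p] r v] lin_map_smult[OF le r T_closed[OF ih(1)[OF p] v]]
            T_smult[OF ih(2)[OF p] r ecl[OF T_closed[OF ih(1)[OF p] v]]] by simp
      qed
    next
      fix p q m v assume p: "p \<in> F" and q: "q \<in> F" and m: "m \<in> Hom C p q" and v: "v \<in> carrier (TO p)"
      let ?h = "comp C (\<iota> (idx q)) (comp C m (\<pi> (idx p)))"
      have h: "?h \<in> Hom C W W" using comp_hom[OF comp_hom[OF ih(2)[OF p] m] ih(1)[OF q]] .
      have iv: "TM (\<iota> (idx p)) v \<in> carrier (TO W)" using T_closed[OF ih(1)[OF p] v] .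
      have Th: "TM ?h y = TM (\<iota> (idx q)) (TM m (TM (\<pi> (idx p)) y))" if "y \<in> carrier (TO W)" for y
        using T_comp[OF comp_hom[OF ih(2)[OF p] m] ih(1)[OF q] that] T_comp[OF ih(2)[OF p] m that] by simp
      have efv: "eF p v \<in> carrier (TO p)"
        unfolding eF_def using T_closed[OF ih(2)[OF p] ecl[OF iv]] .
      have "eF q (TM m v) = TM (\<pi> (idx q)) (e (TM ?h (TM (\<iota> (idx p)) v)))"
        unfolding eF_def using Th[OF iv] pi_iota[OF p v] by simp
      also have "\<dots> = TM (\<pi> (idx q)) (TM ?h (e (TM (\<iota> (idx p)) v)))" using ec h iv by simp
      also have "\<dots> = TM (\<pi> (idx q)) (TM ?h (TM (\<iota> (idx p)) (eF p v)))" using absorb[OF p v] by simp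
      also have "\<dots> = TM m (eF p v)"
        using Th[OF T_closed[OF ih(1)[OF p] efv]] pi_iota[OF p efv] pi_iota[OF q T_closed[OF m efv]] by simp
      finally show "TM m (eF p v) = eF q (TM m v)" by simp
    qed
    then have phie: "\<And>v. v \<in> carrier (TO X) \<Longrightarrow> \<phi> (eF X v) = eF Y (\<phi> v)" using F(6) by blast
    fix y assume y: "y \<in> carrier (TO W)"
    have pay: "TM (\<pi> a) y \<in> carrier (TO X)" using T_closed[OF ia(2) y] .
    have ey: "e y \<in> carrier (TO W)" using ecl[OF y] .
    have "TM (\<pi> a) (e y) = eF X (TM (\<pi> a) y)"
    proof -
      let ?E = "comp C (\<iota> a) (\<pi> a)"
      have E: "?E \<in> Hom C W W" using comp_hom[OF ia(2) ia(1)] .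
      have "eF X (TM (\<pi> a) y) = TM (\<pi> a) (e (TM ?E y))"
        unfolding eF_def a_def using T_comp[OF ia(2) ia(1) y] a_def by simp
      also have "\<dots> = TM (\<pi> a) (TM ?E (e y))" using ec E y by simp
      also have "\<dots> = TM (\<pi> a) (e y)"
        using T_comp[OF ia(2) ia(1) ey] pi_iota[OF F(3) T_closed[OF ia(2) ey]] a_def by simp
      finally show ?thesis by simp
    qed
    then have "\<phi>' (e y) = TM (\<iota> b) (eF Y (\<phi> (TM (\<pi> a) y)))" unfolding \<phi>'_def using phie[OF pay] by simp
    also have "\<dots> = e (TM (\<iota> b) (\<phi> (TM (\<pi> a) y)))" using absorb[OF F(4) phc[OF pay]] b_def by simp
    finally show "\<phi>' (e y) = e (\<phi>' y)" unfolding \<phi>'_def .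
  qed
  obtain g where g: "g \<in> Hom C W W" "\<forall>y\<in>carrier (TO W). TM g y = \<phi>' y"
    using core[OF W lphi comm] by blast
  show "\<exists>g\<in>Hom C X Y. \<forall>v\<in>carrier (TO X). TM g v = \<phi> v"
  proof (intro bexI ballI)
    show "comp C (\<pi> b) (comp C g (\<iota> a)) \<in> Hom C X Y" using comp_hom[OF comp_hom[OF ia(1) g(1)] ib(2)] .
    fix v assume v: "v \<in> carrier (TO X)"
    have iv: "TM (\<iota> a) v \<in> carrier (TO W)" using T_closed[OF ia(1) v] .
    have "TM (comp C (\<pi> b) (comp C g (\<iota> a))) v = TM (\<pi> b) (TM g (TM (\<iota> a) v))"
      using T_comp[OF comp_hom[OF ia(1) g(1)] ib(2) v] T_comp[OF ia(1) g(1) v] by simp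
    also have "\<dots> = TM (\<pi> b) (TM (\<iota> b) (\<phi> v))"
      using g(2) iv pi_iota[OF F(3) v] unfolding \<phi>'_def a_def by simp
    also have "\<dots> = \<phi> v" using pi_iota[OF F(4) phc[OF v]] b_def by simp
    finally show "TM (comp C (\<pi> b) (comp C g (\<iota> a))) v = \<phi> v" .
  qed
qed

end

theorem mainTheorem5:
  fixes R :: "('r, 'x) ring_scheme"
    and C :: "('o, 'm, 'r) lincat"
    and TO :: "'o \<Rightarrow> ('r, 'v) module"
    and TM :: "'m \<Rightarrow> 'v \<Rightarrow> 'v"
  assumes "cring R" and "noetherian_ring R"
    and "is_abelian_R_linear_category R C"
    and "is_fiber_functor R C TO TM"
  shows "Ttilde_full R C TO TM"
proof -
  interpret fctx R C TO TM by (rule fctx.intro) (fact assms)+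
  show ?thesis by (rule full)
qed


end
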